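(* Let $\tau$ be a stopping time with values in $[0,T]$ and $\xi$ an $\mathcal{F}_\tau$-measurable random variable with values in $\mathcal{V}$. Then for every $n\ge0$ and $t\in[\tau,T]$, $$0\le Y^0_t(\xi)\le Y^n_t(\xi)\le\mathbb{E}\big[e^{\int_\tau^T\gamma_sds}\,\big|\,\mathcal{F}_t\big],\quad\mathbb{P}\text{-a.s.}$$ Moreover, if $\tau\ge T-\Delta$, then $Y^n_t(\xi)=O^n_t(\xi)$ for all $t\in[\tau,T]$ and all $n\ge1$.
   Context: Let $T>0$, $(\Omega,\mathcal{F},\mathbb{P})$ a complete probability space carrying a standard $d$-dimensional Brownian motion $B=(B_t)_{t\le T}$, and $(\mathcal{F}_t)_{t\le T}$ the completion by $\mathbb{P}$-null sets of the natural filtration of $B$; $\mathcal{P}$ is the progressive $\sigma$-algebra on $[0,T]\times\Omega$ and $\mathcal{T}_t$ the set of stopping times $\nu$ with $t\le\nu\le T$ a.s. Fix $\ell\ge1$, a $\mathcal{P}$-measurable $\mathbb{R}^\ell$-valued process $X$ with $\mathbb{E}\int_0^T|X_s|^2ds<\infty$, $\Delta\in(0,T)$, a finite set $U=\{a_1,\dots,a_p\}\subset\mathbb{R}^\ell$, and $\psi:\mathbb{R}^\ell\to[0,\infty)$. The map $g:[0,T]\times\Omega\times\mathbb{R}^\ell\to\mathbb{R}$ is $\mathcal{P}\otimes\mathcal{B}(\mathbb{R}^\ell)$-measurable and there is a non-negative $\mathcal{P}$-measurable $\gamma$ with $\mathbb{E}[e^{\int_0^T\gamma_sds}]<\infty$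 and, a.s., $|g(t,\omega,x)|\le\gamma_t(\omega)$ for all $(t,x)$. Scheme: $Y^0_t(a)=\mathbb{E}[\exp\{\int_t^Tg(s,X_s+a)ds\}\mid\mathcal{F}_t]$; for $n\ge1$, $O^n_t(a)=\mathbf{1}_{[t<T-\Delta]}\mathbb{E}[\max_{\beta\in U}\{\exp(\int_t^{t+\Delta}g(s,X_s+a)ds-\psi(\beta))Y^{n-1}_{t+\Delta}(a+\beta)\}\mid\mathcal{F}_t]+\mathbf{1}_{[T-\Delta\le t\le T]}\mathbb{E}[\exp\{\int_t^Tg(s,X_s+a)ds\}\mid\mathcal{F}_t]$ and $Y^n_t(a)=\operatorname{ess\,sup}_{\tau\in\mathcal{T}_t}\mathbb{E}[\exp\{\int_t^\tau g(s,X_s+a)ds\}O^n_\tau(a)\mid\mathcal{F}_t]$. Let $\mathfrak{X}=[T/\Delta]$, $\mathcal{U}_k=\{a_1'+\dots+a_k':(a_1',\dots,a_k')\in U^k\}$ and $\mathcal{V}=\bigcup_{k=1}^{\mathfrak{X}}\mathcal{U}_k$ (a finite set). For a $\mathcal{V}$-valued random variable $\xi$ set $Y^n_t(\xi)=\sum_{a\in\mathcal{V}}Y^n_t(a)\mathbf{1}_{[\xi=a]}$ and $O^n_t(\xi)=\sum_{a\in\mathcal{V}}O^n_t(a)\mathbf{1}_{[\xi=a]}$. *)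

theory Defs
  imports "HOL-Probability.Probability"
begin

definition brownian_filtration ::
  "'a measure \<Rightarrow> (real \<Rightarrow> 'a \<Rightarrow> real^'d) \<Rightarrow> real \<Rightarrow> real \<Rightarrow> 'a measure" where
  "brownian_filtration M B T t =
     sigma (space M)
       ({B r -` A \<inter> space M | r A. r \<in> {0..min t T} \<and> A \<in> sets borel} \<union> null_sets M)"

definition std_brownian_motion ::
  "'a measure \<Rightarrow> real \<Rightarrow> (real \<Rightarrow> 'a \<Rightarrow> real^'d) \<Rightarrow> bool" where
  "std_brownian_motion M T B \<longleftrightarrow>
     (\<forall>t\<in>{0..T}. B t \<in> borel_measurable M) \<and>
     (\<forall>\<omega>\<in>space M. B 0 \<omega> = 0 \<and> continuous_on {0..T} (\<lambda>t. B t \<omega>)) \<and>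
     (\<forall>s t. 0 \<le> s \<and> s < t \<and> t \<le> T \<longrightarrow>
        prob_space.indep_vars M (\<lambda>_. borel) (\<lambda>i \<omega>. (B t \<omega> - B s \<omega>) $ i) UNIV \<and>
        (\<forall>i. distributed M lborel (\<lambda>\<omega>. (B t \<omega> - B s \<omega>) $ i) (normal_density 0 (sqrt (t - s)))) \<and>
        prob_space.indep_set M
          (sigma_sets (space M) {B r -` A \<inter> space M | r A. r \<in> {0..s} \<and> A \<in> sets borel})
          {(\<lambda>\<omega>. B t \<omega> - B s \<omega>) -` A \<inter> space M | A. A \<in> sets (borel :: (real^'d) measure)})"

definition progressive ::
  "(real \<Rightarrow> 'a measure) \<Rightarrow> real \<Rightarrow> (real \<Rightarrow> 'a \<Rightarrow> 'b::topological_space) \<Rightarrow> bool" where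
  "progressive F T X \<longleftrightarrow>
     (\<forall>t\<in>{0..T}. (\<lambda>(s, \<omega>). X s \<omega>) \<in> borel_measurable (restrict_space borel {0..t} \<Otimes>\<^sub>M F t))"

definition progressive_param ::
  "(real \<Rightarrow> 'a measure) \<Rightarrow> real \<Rightarrow> (real \<Rightarrow> 'a \<Rightarrow> 'c::topological_space \<Rightarrow> real) \<Rightarrow> bool" where
  "progressive_param F T g \<longleftrightarrow>
     (\<forall>t\<in>{0..T}. (\<lambda>((s, \<omega>), x). g s \<omega> x)
        \<in> borel_measurable ((restrict_space borel {0..t} \<Otimes>\<^sub>M F t) \<Otimes>\<^sub>M borel))"

definition ess_sup_family :: "'a measure \<Rightarrow> ('a \<Rightarrow> real) set \<Rightarrow> ('a \<Rightarrow> real)" where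
  "ess_sup_family M Zs =
     (SOME Y. Y \<in> borel_measurable M \<and> (\<forall>Z\<in>Zs. AE \<omega> in M. Z \<omega> \<le> Y \<omega>) \<and>
        (\<forall>Y'\<in>borel_measurable M. (\<forall>Z\<in>Zs. AE \<omega> in M. Z \<omega> \<le> Y' \<omega>) \<longrightarrow> (AE \<omega> in M. Y \<omega> \<le> Y' \<omega>)))"

definition stopping_times_from ::
  "'a measure \<Rightarrow> (real \<Rightarrow> 'a measure) \<Rightarrow> real \<Rightarrow> ('a \<Rightarrow> real) \<Rightarrow> ('a \<Rightarrow> real) set" where
  "stopping_times_from M F T \<sigma> =
     {\<nu>. stopping_time F \<nu> \<and> (AE \<omega> in M. \<sigma> \<omega> \<le> \<nu> \<omega> \<and> \<nu> \<omega> \<le> T)}"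

definition cexp_st ::
  "'a measure \<Rightarrow> (real \<Rightarrow> 'a measure) \<Rightarrow> ('a \<Rightarrow> real) \<Rightarrow> ('a \<Rightarrow> real) \<Rightarrow> ('a \<Rightarrow> real)" where
  "cexp_st M F \<sigma> f = real_cond_exp M (filtration.pre_sigma (space M) F \<sigma>) f"

definition Igr ::
  "(real \<Rightarrow> 'a \<Rightarrow> real^'l \<Rightarrow> real) \<Rightarrow> (real \<Rightarrow> 'a \<Rightarrow> real^'l) \<Rightarrow> real^'l
     \<Rightarrow> ('a \<Rightarrow> real) \<Rightarrow> ('a \<Rightarrow> real) \<Rightarrow> 'a \<Rightarrow> real" where
  "Igr g X a \<sigma> \<nu> \<omega> = (LINT s:{\<sigma> \<omega>..\<nu> \<omega>}|lborel. g s \<omega> (X s \<omega> + a))"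

definition O_step ::
  "'a measure \<Rightarrow> (real \<Rightarrow> 'a measure) \<Rightarrow> real \<Rightarrow> (real \<Rightarrow> 'a \<Rightarrow> real^'l) \<Rightarrow> real
   \<Rightarrow> (real^'l) set \<Rightarrow> (real^'l \<Rightarrow> real) \<Rightarrow> (real \<Rightarrow> 'a \<Rightarrow> real^'l \<Rightarrow> real)
   \<Rightarrow> (('a \<Rightarrow> real) \<Rightarrow> real^'l \<Rightarrow> 'a \<Rightarrow> real)
   \<Rightarrow> ('a \<Rightarrow> real) \<Rightarrow> real^'l \<Rightarrow> 'a \<Rightarrow> real" where
  "O_step M F T X \<Delta> U \<psi> g Yprev \<sigma> a =
     (\<lambda>\<omega>. cexp_st M F \<sigma>
            (\<lambda>\<omega>'. indicator {\<omega>''. \<sigma> \<omega>'' < T - \<Delta>} \<omega>' *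
               Max ((\<lambda>\<beta>. exp (Igr g X a \<sigma> (\<lambda>\<omega>''. \<sigma> \<omega>'' + \<Delta>) \<omega>' - \<psi> \<beta>)
                          * Yprev (\<lambda>\<omega>''. min (\<sigma> \<omega>'' + \<Delta>) T) (a + \<beta>) \<omega>') ` U)) \<omega>
        + indicator {\<omega>''. T - \<Delta> \<le> \<sigma> \<omega>'' \<and> \<sigma> \<omega>'' \<le> T} \<omega> *
            cexp_st M F \<sigma> (\<lambda>\<omega>'. exp (Igr g X a \<sigma> (\<lambda>_. T) \<omega>')) \<omega>)"

primrec Ysch ::
  "'a measure \<Rightarrow> (real \<Rightarrow> 'a measure) \<Rightarrow> real \<Rightarrow> (real \<Rightarrow> 'a \<Rightarrow> real^'l) \<Rightarrow> real
   \<Rightarrow> (real^'l) set \<Rightarrow> (real^'l \<Rightarrow> real) \<Rightarrow> (real \<Rightarrow> 'a \<Rightarrow> real^'l \<Rightarrow> real)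
   \<Rightarrow> nat \<Rightarrow> ('a \<Rightarrow> real) \<Rightarrow> real^'l \<Rightarrow> 'a \<Rightarrow> real" where
  "Ysch M F T X \<Delta> U \<psi> g 0 \<sigma> a = cexp_st M F \<sigma> (\<lambda>\<omega>. exp (Igr g X a \<sigma> (\<lambda>_. T) \<omega>))"
| "Ysch M F T X \<Delta> U \<psi> g (Suc m) \<sigma> a =
     ess_sup_family M
       {cexp_st M F \<sigma> (\<lambda>\<omega>. exp (Igr g X a \<sigma> \<nu> \<omega>) *
            O_step M F T X \<Delta> U \<psi> g (Ysch M F T X \<Delta> U \<psi> g m) \<nu> a \<omega>)
        | \<nu>. \<nu> \<in> stopping_times_from M F T \<sigma>}"

text \<open>O^n for n >= 1.\<close>
definition Osch ::
  "'a measure \<Rightarrow> (real \<Rightarrow> 'a measure) \<Rightarrow> real \<Rightarrow> (real \<Rightarrow> 'a \<Rightarrow> real^'l) \<Rightarrow> real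
   \<Rightarrow> (real^'l) set \<Rightarrow> (real^'l \<Rightarrow> real) \<Rightarrow> (real \<Rightarrow> 'a \<Rightarrow> real^'l \<Rightarrow> real)
   \<Rightarrow> nat \<Rightarrow> ('a \<Rightarrow> real) \<Rightarrow> real^'l \<Rightarrow> 'a \<Rightarrow> real" where
  "Osch M F T X \<Delta> U \<psi> g n = O_step M F T X \<Delta> U \<psi> g (Ysch M F T X \<Delta> U \<psi> g (n - 1))"

definition Usums :: "(real^'l) set \<Rightarrow> nat \<Rightarrow> (real^'l) set" where
  "Usums U k = {sum_list as | as. length as = k \<and> set as \<subseteq> U}"

definition Vset :: "(real^'l) set \<Rightarrow> real \<Rightarrow> real \<Rightarrow> (real^'l) set" where
  "Vset U T \<Delta> = (\<Union>k\<in>{1..nat \<lfloor>T / \<Delta>\<rfloor>}. Usums U k)"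

text \<open>Evaluation at a V-valued random variable xi: sum over a in V of Z(a) 1_{xi = a}.\<close>
definition at_rv :: "(real^'l) set \<Rightarrow> (real^'l \<Rightarrow> 'a \<Rightarrow> real) \<Rightarrow> ('a \<Rightarrow> real^'l) \<Rightarrow> 'a \<Rightarrow> real" where
  "at_rv V Z \<xi> \<omega> = (\<Sum>a\<in>V. Z a \<omega> * indicator {\<omega>'. \<xi> \<omega>' = a} \<omega>)"

end

theory Submission
  imports Defs
begin


lemma ess_sup_exists:
  fixes M :: "'a measure" and Zs :: "('a \<Rightarrow> real) set"
  assumes P: "prob_space M"
    and meas: "Zs \<subseteq> borel_measurable M" and ne: "Z0 \<in> Zs"
    and W[measurable]: "W \<in> borel_measurable M" and bnd: "\<forall>Z\<in>Zs. AE \<omega> in M. Z \<omega> \<le> W \<omega>"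
  shows "\<exists>Y. Y \<in> borel_measurable M \<and> (\<forall>Z\<in>Zs. AE \<omega> in M. Z \<omega> \<le> Y \<omega>) \<and>
          (\<forall>Y'\<in>borel_measurable M. (\<forall>Z\<in>Zs. AE \<omega> in M. Z \<omega> \<le> Y' \<omega>) \<longrightarrow> (AE \<omega> in M. Y \<omega> \<le> Y' \<omega>))"
proof -
  interpret prob_space M by (rule P)
  define S where "S C \<omega> = (SUP Z\<in>C. arctan (Z \<omega>))" for C :: "('a \<Rightarrow> real) set" and \<omega>
  define cs where "cs = {C. countable C \<and> C \<subseteq> Zs \<and> Z0 \<in> C}"
  have atle: "arctan x * 2 \<le> pi" "arctan x \<le> pi/2" for x using arctan_bounded[of x] by linarith+
  have bdd: "bdd_above ((\<lambda>Z. arctan (Z \<omega>)) ` C)" for C :: "('a \<Rightarrow> real) set" and \<omega>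
    by (rule bdd_aboveI[of _ "pi/2"]) (auto intro: atle)
  have Sub: "S C \<omega> \<le> pi/2" if "C \<in> cs" for C \<omega>
    using that unfolding S_def cs_def
    by (intro cSUP_least) (auto intro: atle)
  have Slb: "arctan (Z \<omega>) \<le> S C \<omega>" if "Z \<in> C" for C Z \<omega>
    unfolding S_def using that bdd by (intro cSUP_upper) auto
  have Slb0: "- (pi/2) < S C \<omega>" if "C \<in> cs" for C \<omega>
    using Slb[of Z0 C \<omega>] arctan_bounded[of "Z0 \<omega>"] that by (auto simp: cs_def)
  have Smeas: "S C \<in> borel_measurable M" if "C \<in> cs" for C
  proof -
    have "countable C" "C \<subseteq> borel_measurable M" using that meas by (auto simp: cs_def)
    then show ?thesis unfolding S_def
      by (intro borel_measurable_cSUP) (auto intro: bdd)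
  qed
  have Sint: "integrable M (S C)" if "C \<in> cs" for C
    using Sub[OF that] Slb0[OF that]
  proof (intro integrable_const_bound[where B="pi/2"])
    show "AE x in M. norm (S C x) \<le> pi/2" using Sub[OF that] Slb0[OF that]
      by (intro AE_I2) (smt (verit) real_norm_def)
  qed (rule Smeas[OF that])
  define J where "J C = integral\<^sup>L M (S C)" for C
  have Jle: "J C \<le> pi/2" if "C \<in> cs" for C
  proof -
    have "J C \<le> integral\<^sup>L M (\<lambda>_. pi/2)" unfolding J_def
      using Sub[OF that] by (intro integral_mono Sint that) (auto simp: divide_simps)
    then show ?thesis by (simp add: prob_space)
  qed
  have Smono: "S C \<omega> \<le> S D \<omega>" if "C \<in> cs" "D \<in> cs" "C \<subseteq> D" for C D \<omega>
    using that unfolding S_def cs_def by (intro cSUP_subset_mono bdd) auto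
  have Jmono: "J C \<le> J D" if "C \<in> cs" "D \<in> cs" "C \<subseteq> D" for C D
    unfolding J_def by (intro integral_mono Sint that Smono)
  have csne: "{Z0} \<in> cs" using ne by (auto simp: cs_def)
  define s where "s = Sup (J ` cs)"
  have bddJ: "bdd_above (J ` cs)" by (rule bdd_aboveI[of _ "pi/2"]) (use Jle in blast)
  have Jles: "J C \<le> s" if "C \<in> cs" for C unfolding s_def using that bddJ by (intro cSup_upper) auto
  have "\<exists>C\<in>cs. s - 1 / (Suc n) < J C" for n :: nat
  proof -
    have "s - 1 / Suc n < s" by simp
    then show ?thesis unfolding s_def using csne bddJ by (subst (asm) less_cSup_iff) auto
  qed
  then obtain Cn where Cn: "\<And>n. Cn n \<in> cs" "\<And>n. s - 1 / Suc n < J (Cn n)" by metis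
  define Cs where "Cs = (\<Union>n. Cn n)"
  have Cs: "Cs \<in> cs" using Cn(1) unfolding Cs_def cs_def by auto
  have JCs: "J Cs = s"
  proof (rule antisym)
    show "J Cs \<le> s" by (rule Jles[OF Cs])
    show "s \<le> J Cs"
    proof (rule field_le_epsilon)
      fix e :: real assume "0 < e"
      then obtain n :: nat where n: "1 / Suc n < e"
        by (metis nat_approx_posE)
      have "s - 1 / Suc n < J (Cn n)" by (rule Cn(2))
      also have "\<dots> \<le> J Cs" using Cn(1) Cs by (intro Jmono) (auto simp: Cs_def)
      finally show "s \<le> J Cs + e" using n by simp
    qed
  qed
  have Smeas' [measurable]: "S Cs \<in> borel_measurable M" by (rule Smeas[OF Cs])
  have upper: "AE \<omega> in M. arctan (Z \<omega>) \<le> S Cs \<omega>" if Z: "Z \<in> Zs" for Z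
  proof -
    define C' where "C' = insert Z Cs"
    have C': "C' \<in> cs" using Cs Z by (auto simp: C'_def cs_def)
    have "J C' \<le> J Cs" using Jles[OF C'] JCs by simp
    moreover have "J Cs \<le> J C'" using Cs C' by (intro Jmono) (auto simp: C'_def)
    ultimately have "J C' - J Cs = 0" by simp
    then have "integral\<^sup>L M (\<lambda>\<omega>. S C' \<omega> - S Cs \<omega>) = 0"
      unfolding J_def using Sint[OF C'] Sint[OF Cs] by simp
    then have "AE \<omega> in M. S C' \<omega> - S Cs \<omega> = 0"
      using Sint[OF C'] Sint[OF Cs] Smono[OF Cs C'] by (subst (asm) integral_nonneg_eq_0_iff_AE) (auto simp: C'_def)
    then show ?thesis
    proof (eventually_elim)
      case (elim \<omega>) then show ?case using Slb[of Z C' \<omega>] by (simp add: C'_def)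
    qed
  qed
  have CsZs: "Cs \<subseteq> Zs" "countable Cs" "Z0 \<in> Cs" using Cs by (auto simp: cs_def)
  have AEW: "AE \<omega> in M. \<forall>Z\<in>Cs. Z \<omega> \<le> W \<omega>"
    using CsZs bnd by (subst AE_ball_countable) auto
  have AEb: "AE \<omega> in M. - (pi/2) < S Cs \<omega> \<and> S Cs \<omega> < pi/2"
    using AEW
  proof (eventually_elim)
    case (elim \<omega>)
    have "S Cs \<omega> \<le> arctan (W \<omega>)" unfolding S_def using CsZs elim
      by (intro cSUP_least) (auto simp: arctan_le_iff)
    then show ?case using Slb0[OF Cs] arctan_bounded[of "W \<omega>"] by auto
  qed
  define Y where "Y \<omega> = tan (S Cs \<omega>)" for \<omega>
  have Ym: "Y \<in> borel_measurable M" unfolding Y_def tan_def by measurable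
  show ?thesis
  proof (intro exI conjI ballI impI)
    show "Y \<in> borel_measurable M" by (rule Ym)
  next
    fix Z assume Z: "Z \<in> Zs"
    show "AE \<omega> in M. Z \<omega> \<le> Y \<omega>" using upper[OF Z] AEb
    proof (eventually_elim)
      case (elim \<omega>)
      have "tan (arctan (Z \<omega>)) \<le> tan (S Cs \<omega>)"
        using elim arctan_bounded[of "Z \<omega>"] by (intro tan_mono_le) auto
      then show ?case by (simp add: Y_def tan_arctan)
    qed
  next
    fix Y' :: "'a \<Rightarrow> real" assume "Y' \<in> borel_measurable M" and H: "\<forall>Z\<in>Zs. AE \<omega> in M. Z \<omega> \<le> Y' \<omega>"
    have "AE \<omega> in M. \<forall>Z\<in>Cs. Z \<omega> \<le> Y' \<omega>" using CsZs H by (subst AE_ball_countable) auto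
    then show "AE \<omega> in M. Y \<omega> \<le> Y' \<omega>" using AEb
    proof (eventually_elim)
      case (elim \<omega>)
      have "S Cs \<omega> \<le> arctan (Y' \<omega>)" unfolding S_def using CsZs elim
        by (intro cSUP_least) (auto simp: arctan_le_iff)
      then have "tan (S Cs \<omega>) \<le> tan (arctan (Y' \<omega>))"
        using elim arctan_bounded[of "Y' \<omega>"] by (intro tan_mono_le) auto
      then show ?case by (simp add: Y_def tan_arctan)
    qed
  qed
qed



lemma int_meas0:
  fixes h :: "real \<Rightarrow> 'a \<Rightarrow> real"
  assumes h[measurable]: "(\<lambda>(s,\<omega>). h s \<omega>) \<in> borel_measurable (restrict_space borel {0..r} \<Otimes>\<^sub>M N)"
    and a[measurable]: "a \<in> borel_measurable N" and b[measurable]: "b \<in> borel_measurable N"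
    and ab: "\<And>\<omega>. \<omega> \<in> space N \<Longrightarrow> 0 \<le> a \<omega> \<and> b \<omega> \<le> r" and r0: "0 \<le> r"
  shows "(\<lambda>\<omega>. LINT s:{a \<omega>..b \<omega>}|lborel. h s \<omega>) \<in> borel_measurable N"
proof -
  define cl where "cl s = max 0 (min s r)" for s :: real
  have eq: "(LINT s:{a \<omega>..b \<omega>}|lborel. h s \<omega>) =
     (\<integral>s. (if a \<omega> \<le> s \<and> s \<le> b \<omega> then 1 else 0) * h (cl s) \<omega> \<partial>lborel)" if "\<omega> \<in> space N" for \<omega>
    unfolding set_lebesgue_integral_def
  proof (intro Bochner_Integration.integral_cong refl)
    fix s :: real
    show "indicator {a \<omega>..b \<omega>} s *\<^sub>R h s \<omega> = (if a \<omega> \<le> s \<and> s \<le> b \<omega> then 1 else 0) * h (cl s) \<omega>"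
      using ab[OF that] by (auto simp: cl_def indicator_def)
  qed
  have clm: "(\<lambda>x. cl (snd x)) \<in> N \<Otimes>\<^sub>M lborel \<rightarrow>\<^sub>M restrict_space borel {0..r}"
  proof (rule measurable_restrict_space2)
    show "(\<lambda>x. cl (snd x)) \<in> space (N \<Otimes>\<^sub>M lborel) \<rightarrow> {0..r}"
    proof
      fix x show "cl (snd x) \<in> {0..r}" using r0 by (auto simp: cl_def)
    qed
    show "(\<lambda>x. cl (snd x)) \<in> borel_measurable (N \<Otimes>\<^sub>M lborel)" unfolding cl_def by measurable
  qed
  have hm: "(\<lambda>x. h (cl (snd x)) (fst x)) \<in> borel_measurable (N \<Otimes>\<^sub>M lborel)"
  proof -
    have "(\<lambda>x. (cl (snd x), fst x)) \<in> N \<Otimes>\<^sub>M lborel \<rightarrow>\<^sub>M restrict_space borel {0..r} \<Otimes>\<^sub>M N"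
      using clm by measurable
    from measurable_compose[OF this h] show ?thesis by simp
  qed
  have "(\<lambda>\<omega>. \<integral>s. (if a \<omega> \<le> s \<and> s \<le> b \<omega> then 1 else 0) * h (cl s) \<omega> \<partial>lborel) \<in> borel_measurable N"
  proof (rule lborel.borel_measurable_lebesgue_integral)
    show "(\<lambda>(\<omega>, s). (if a \<omega> \<le> s \<and> s \<le> b \<omega> then 1 else 0) * h (cl s) \<omega>) \<in> borel_measurable (N \<Otimes>\<^sub>M lborel)"
      using hm unfolding case_prod_beta by measurable
  qed
  then show ?thesis by (rule measurable_cong[THEN iffD1, rotated]) (simp add: eq)
qed

locale stp =
  fixes M :: "'a measure" and F :: "real \<Rightarrow> 'a measure" and T :: real
  assumes prob: "prob_space M" and compl: "complete_measure M"
    and F_space: "\<And>t. space (F t) = space M"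
    and F_sets: "\<And>t. sets (F t) \<subseteq> sets M"
    and F_mono: "\<And>s t. s \<le> t \<Longrightarrow> sets (F s) \<subseteq> sets (F t)"
    and F_null: "\<And>t. null_sets M \<subseteq> sets (F t)"
    and T_pos: "0 < T"
begin

sublocale prob_space M by (rule prob)
sublocale complete_measure M by (rule compl)
sublocale filtration "space M" F
  by standard (auto simp: F_space F_mono)

lemma st_meas: "stopping_time F \<sigma> \<Longrightarrow> \<sigma> \<in> borel_measurable M"
  by (rule measurable_stopping_time[of F \<sigma> M]) (auto simp: F_space F_sets)

lemma pre_sets: assumes "stopping_time F \<sigma>" shows "sets (pre_sigma \<sigma>) \<subseteq> sets M"
proof
  fix A assume A: "A \<in> sets (pre_sigma \<sigma>)"
  then have "A \<subseteq> space M" using sets.sets_into_space space_pre_sigma by blast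
  have "{\<omega>\<in>A. \<sigma> \<omega> \<le> real n} \<in> sets M" for n
    using sets_pre_sigmaD[OF assms A, of "real n"] F_sets by blast
  then have "(\<Union>n. {\<omega>\<in>A. \<sigma> \<omega> \<le> real n}) \<in> sets M" by blast
  also have "(\<Union>n. {\<omega>\<in>A. \<sigma> \<omega> \<le> real n}) = A"
    by (auto intro: real_nat_ceiling_ge)
  finally show "A \<in> sets M" .
qed

lemma pre_subalg: "stopping_time F \<sigma> \<Longrightarrow> subalgebra M (pre_sigma \<sigma>)"
  using pre_sets by (auto simp: subalgebra_def space_pre_sigma)

lemma pre_sfs: "stopping_time F \<sigma> \<Longrightarrow> sigma_finite_subalgebra M (pre_sigma \<sigma>)"
  by (rule finite_measure_subalgebra_is_sigma_finite) (auto simp: finite_measure_subalgebra_def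
      finite_measure_subalgebra_axioms_def pre_subalg finite_measure_axioms)

lemma null_in_F: "N \<subseteq> A \<Longrightarrow> A \<in> null_sets M \<Longrightarrow> N \<in> sets (F t)"
  using F_null complete2 by blast

lemma pre_null: assumes "stopping_time F \<sigma>" "N \<in> null_sets M" shows "N \<in> sets (pre_sigma \<sigma>)"
  using assms by (intro sets_pre_sigmaI) (auto intro: null_in_F)

lemma pre_mono: assumes s: "stopping_time F \<sigma>" and n: "stopping_time F \<nu>"
  and ae: "AE \<omega> in M. \<sigma> \<omega> \<le> \<nu> \<omega>"
  shows "sets (pre_sigma \<sigma>) \<subseteq> sets (pre_sigma \<nu>)"
proof
  fix A assume A: "A \<in> sets (pre_sigma \<sigma>)"
  then have Asp: "A \<subseteq> space M" using sets.sets_into_space space_pre_sigma by blast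
  have sm[measurable]: "\<sigma> \<in> borel_measurable M" "\<nu> \<in> borel_measurable M" using s n by (auto intro: st_meas)
  have N: "{\<omega>\<in>space M. \<not> \<sigma> \<omega> \<le> \<nu> \<omega>} \<in> null_sets M"
    using ae by (subst (asm) AE_iff_null_sets) auto
  show "A \<in> sets (pre_sigma \<nu>)"
  proof (rule sets_pre_sigmaI[OF n])
    fix t
    have "{\<omega>\<in>A. \<nu> \<omega> \<le> t} = ({\<omega>\<in>A. \<sigma> \<omega> \<le> t} \<inter> {\<omega>\<in>space M. \<nu> \<omega> \<le> t}) \<union> {\<omega>\<in>A. \<nu> \<omega> \<le> t \<and> \<not> \<sigma> \<omega> \<le> t}"
      using Asp by auto
    moreover have "{\<omega>\<in>A. \<sigma> \<omega> \<le> t} \<in> sets (F t)" by (rule sets_pre_sigmaD[OF s A])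
    moreover have "{\<omega>\<in>space M. \<nu> \<omega> \<le> t} \<in> sets (F t)"
      using stopping_timeD[OF n, of t] by (auto simp: pred_def F_space)
    moreover have "{\<omega>\<in>A. \<nu> \<omega> \<le> t \<and> \<not> \<sigma> \<omega> \<le> t} \<in> sets (F t)"
      by (rule null_in_F[OF _ N]) (use Asp in auto)
    ultimately show "{\<omega>\<in>A. \<nu> \<omega> \<le> t} \<in> sets (F t)" by auto
  qed
qed

lemma pre_const: "sets (pre_sigma (\<lambda>_. t)) = sets (F t)"
proof
  show "sets (pre_sigma (\<lambda>_. t)) \<subseteq> sets (F t)"
    using sets_pre_sigmaD[OF stopping_time_const, of _ t t] by auto
  show "sets (F t) \<subseteq> sets (pre_sigma (\<lambda>_. t))"
  proof
    fix A assume A: "A \<in> sets (F t)"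
    show "A \<in> sets (pre_sigma (\<lambda>_. t))"
    proof (rule sets_pre_sigmaI[OF stopping_time_const])
      fix s show "{\<omega>\<in>A. t \<le> s} \<in> sets (F s)"
        using A F_mono[of t s] by (cases "t \<le> s") auto
    qed
  qed
qed

lemma meas_ae:
  assumes G: "space G = space M" "null_sets M \<subseteq> sets G" "sets G \<subseteq> sets M"
    and f: "f \<in> borel_measurable G" and ae: "AE \<omega> in M. f \<omega> = h \<omega>"
  shows "(h :: 'a \<Rightarrow> real) \<in> borel_measurable G"
proof (rule measurableI)
  show "h x \<in> space borel" for x by simp
  fix B :: "real set" assume B: "B \<in> sets borel"
  define N where "N = {\<omega>\<in>space M. f \<omega> \<noteq> h \<omega>}"
  have N: "N \<in> null_sets M" unfolding N_def using ae by (subst (asm) AE_iff_null_sets) auto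
  have "h -` B \<inter> space G = ((f -` B \<inter> space G) - N) \<union> (h -` B \<inter> N)"
    using G(1) by (auto simp: N_def)
  moreover have "f -` B \<inter> space G \<in> sets G" using f B by (rule measurable_sets)
  moreover have "N \<in> sets G" using N G by auto
  moreover have "h -` B \<inter> N \<in> sets G" using G(2) complete2[OF _ N, of "h -` B \<inter> N"] by auto
  ultimately show "h -` B \<inter> space G \<in> sets G" by auto
qed

lemma meas_ae_pre:
  assumes "stopping_time F \<sigma>" "f \<in> borel_measurable (pre_sigma \<sigma>)" "AE \<omega> in M. f \<omega> = h \<omega>"
  shows "(h :: 'a \<Rightarrow> real) \<in> borel_measurable (pre_sigma \<sigma>)"
proof (rule meas_ae[OF _ _ _ assms(2) assms(3)])
  show "null_sets M \<subseteq> sets (pre_sigma \<sigma>)" using pre_null[OF assms(1)] by blast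
qed (simp_all add: space_pre_sigma pre_sets[OF assms(1)])

lemma meas_ae_M:
  assumes "f \<in> borel_measurable M" "AE \<omega> in M. f \<omega> = h \<omega>"
  shows "(h :: 'a \<Rightarrow> real) \<in> borel_measurable M"
proof (rule meas_ae[OF refl _ order_refl assms])
  show "null_sets M \<subseteq> sets M" by (auto dest: null_setsD2)
qed

lemma pre_meas_M: "stopping_time F \<sigma> \<Longrightarrow> f \<in> borel_measurable (pre_sigma \<sigma>) \<Longrightarrow> f \<in> borel_measurable M"
  using measurable_from_subalg[OF pre_subalg] by blast

lemma min_meas: assumes "stopping_time F \<rho>" shows "(\<lambda>\<omega>. min (\<rho> \<omega>) r) \<in> borel_measurable (F r)"
proof (rule borel_measurableI_le)
  fix c
  show "{w \<in> space (F r). min (\<rho> w) r \<le> c} \<in> sets (F r)"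
  proof (cases "r \<le> c")
    case True
    then have "{w \<in> space (F r). min (\<rho> w) r \<le> c} = space (F r)" by auto
    then show ?thesis by simp
  next
    case False
    then have "{w \<in> space (F r). min (\<rho> w) r \<le> c} = {w \<in> space (F c). \<rho> w \<le> c}"
      by (auto simp: F_space)
    also have "\<dots> \<in> sets (F c)" using stopping_timeD[OF assms, of c] by (auto simp: pred_def)
    finally show ?thesis using F_mono[of c r] False by auto
  qed
qed

lemma int_meas_strict:
  fixes h :: "real \<Rightarrow> 'a \<Rightarrow> real"
  assumes h: "progressive F T h" and r: "stopping_time F \<rho>" and n: "stopping_time F \<nu>"
    and b: "\<And>\<omega>. \<omega> \<in> space M \<Longrightarrow> 0 \<le> \<rho> \<omega> \<and> \<rho> \<omega> \<le> \<nu> \<omega> \<and> \<nu> \<omega> \<le> T"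
  shows "(\<lambda>\<omega>. LINT s:{\<rho> \<omega>..\<nu> \<omega>}|lborel. h s \<omega>) \<in> borel_measurable (pre_sigma \<nu>)"
proof (rule measurableI)
  show "(LINT s:{\<rho> x..\<nu> x}|lborel. h s x) \<in> space borel" for x by simp
  fix B :: "real set" assume B: "B \<in> sets borel"
  show "(\<lambda>\<omega>. LINT s:{\<rho> \<omega>..\<nu> \<omega>}|lborel. h s \<omega>) -` B \<inter> space (pre_sigma \<nu>) \<in> sets (pre_sigma \<nu>)"
  proof (rule sets_pre_sigmaI[OF n])
    fix t
    let ?A = "(\<lambda>\<omega>. LINT s:{\<rho> \<omega>..\<nu> \<omega>}|lborel. h s \<omega>) -` B \<inter> space (pre_sigma \<nu>)"
    show "{\<omega> \<in> ?A. \<nu> \<omega> \<le> t} \<in> sets (F t)"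
    proof (cases "t < 0")
      case True
      have "{\<omega> \<in> ?A. \<nu> \<omega> \<le> t} = {}"
      proof -
        { fix \<omega> assume "\<omega> \<in> ?A" "\<nu> \<omega> \<le> t"
          then have "\<omega> \<in> space M" by (simp add: space_pre_sigma)
          then have False using b[of \<omega>] True \<open>\<nu> \<omega> \<le> t\<close> by linarith }
        then show ?thesis by blast
      qed
      then show ?thesis by (metis sets.empty_sets)
    next
      case False
      define r where "r = min t T"
      have r: "r \<in> {0..T}" "r \<le> t" using False T_pos by (auto simp: r_def)
      define f where "f \<omega> = (LINT s:{min (\<rho> \<omega>) r..min (\<nu> \<omega>) r}|lborel. h s \<omega>)" for \<omega>
      have fm: "f \<in> borel_measurable (F r)" unfolding f_def
      proof (rule int_meas0)
        show "(\<lambda>(s, \<omega>). h s \<omega>) \<in> borel_measurable (restrict_space borel {0..r} \<Otimes>\<^sub>M F r)"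
          using h r unfolding progressive_def by auto
        show "(\<lambda>\<omega>. min (\<rho> \<omega>) r) \<in> borel_measurable (F r)" by (rule min_meas[OF \<open>stopping_time F \<rho>\<close>])
        show "(\<lambda>\<omega>. min (\<nu> \<omega>) r) \<in> borel_measurable (F r)" by (rule min_meas[OF n])
        show "\<And>\<omega>. \<omega> \<in> space (F r) \<Longrightarrow> 0 \<le> min (\<rho> \<omega>) r \<and> min (\<nu> \<omega>) r \<le> r"
          using b r by (auto simp: F_space)
      qed (use r in simp)
      have "{\<omega> \<in> ?A. \<nu> \<omega> \<le> t} = (f -` B \<inter> space (F r)) \<inter> {\<omega>\<in>space (F t). \<nu> \<omega> \<le> t}"
      proof -
        have "f \<omega> = (LINT s:{\<rho> \<omega>..\<nu> \<omega>}|lborel. h s \<omega>)" if "\<omega> \<in> space M" "\<nu> \<omega> \<le> t" for \<omega>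
          using b[OF that(1)] that(2) by (simp add: f_def r_def)
        then show ?thesis by (auto simp: F_space space_pre_sigma)
      qed
      moreover have "f -` B \<inter> space (F r) \<in> sets (F t)"
        using measurable_sets[OF fm B] F_mono[OF r(2)] by auto
      moreover have "{\<omega>\<in>space (F t). \<nu> \<omega> \<le> t} \<in> sets (F t)"
        using stopping_timeD[OF n, of t] by (auto simp: pred_def)
      ultimately show ?thesis by auto
    qed
  qed
qed

lemma pre_eq_ae:
  assumes "stopping_time F \<sigma>" "stopping_time F \<nu>" "AE \<omega> in M. \<sigma> \<omega> = \<nu> \<omega>"
  shows "sets (pre_sigma \<sigma>) = sets (pre_sigma \<nu>)"
  using assms by (intro antisym pre_mono) (auto elim: AE_mp)

lemma int_meas:
  fixes h :: "real \<Rightarrow> 'a \<Rightarrow> real"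
  assumes h: "progressive F T h" and r: "stopping_time F \<rho>" and n: "stopping_time F \<nu>"
    and b: "AE \<omega> in M. 0 \<le> \<rho> \<omega> \<and> \<rho> \<omega> \<le> \<nu> \<omega> \<and> \<nu> \<omega> \<le> T"
  shows "(\<lambda>\<omega>. LINT s:{\<rho> \<omega>..\<nu> \<omega>}|lborel. h s \<omega>) \<in> borel_measurable (pre_sigma \<nu>)"
proof -
  define \<nu>' where "\<nu>' \<omega> = max 0 (min (\<nu> \<omega>) T)" for \<omega>
  define \<rho>' where "\<rho>' \<omega> = max 0 (min (\<rho> \<omega>) (\<nu>' \<omega>))" for \<omega>
  have n': "stopping_time F \<nu>'" unfolding \<nu>'_def
    by (intro stopping_time_max stopping_time_min stopping_time_const n)
  have r': "stopping_time F \<rho>'" unfolding \<rho>'_def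
    by (intro stopping_time_max stopping_time_min stopping_time_const r n')
  have "(\<lambda>\<omega>. LINT s:{\<rho>' \<omega>..\<nu>' \<omega>}|lborel. h s \<omega>) \<in> borel_measurable (pre_sigma \<nu>')"
    by (rule int_meas_strict[OF h r' n']) (use T_pos in \<open>auto simp: \<rho>'_def \<nu>'_def\<close>)
  moreover have "sets (pre_sigma \<nu>') = sets (pre_sigma \<nu>)"
    using b by (intro pre_eq_ae n' n) (auto simp: \<nu>'_def elim!: AE_mp)
  ultimately have m: "(\<lambda>\<omega>. LINT s:{\<rho>' \<omega>..\<nu>' \<omega>}|lborel. h s \<omega>) \<in> borel_measurable (pre_sigma \<nu>)"
    by (simp cong: measurable_cong_sets)
  show ?thesis
    by (rule meas_ae_pre[OF n m]) (use b in \<open>auto simp: \<rho>'_def \<nu>'_def elim!: AE_mp\<close>)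
qed

end



lemma real_cond_exp_sets_cong:
  assumes "space A = space B" "sets A = sets B"
  shows "real_cond_exp M A = real_cond_exp M B"
proof -
  have 1: "restr_to_subalg N A = restr_to_subalg N B" for N
    unfolding restr_to_subalg_def using assms(2) by metis
  have 2: "subalgebra M A = subalgebra M B"
    unfolding subalgebra_def using assms by metis
  show ?thesis unfolding real_cond_exp_def nn_cond_exp_def 1 2 ..
qed

context stp begin

abbreviation "E \<sigma> f \<equiv> cexp_st M F \<sigma> f"

lemma E_meas[measurable]: "E \<sigma> f \<in> borel_measurable M"
  unfolding cexp_st_def by simp

lemma E_meas_pre: "E \<sigma> f \<in> borel_measurable (pre_sigma \<sigma>)"
  unfolding cexp_st_def by simp

lemma E_const: "E (\<lambda>_. t) = real_cond_exp M (F t)"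
  unfolding cexp_st_def by (rule real_cond_exp_sets_cong) (simp_all add: space_pre_sigma F_space pre_const)

lemma E_int: "stopping_time F \<sigma> \<Longrightarrow> integrable M f \<Longrightarrow> integrable M (E \<sigma> f)"
  unfolding cexp_st_def using sigma_finite_subalgebra.real_cond_exp_int(1)[OF pre_sfs] by blast

lemma E_tower:
  assumes s: "stopping_time F \<sigma>" and n: "stopping_time F \<nu>" and ae: "AE \<omega> in M. \<sigma> \<omega> \<le> \<nu> \<omega>"
    and f: "integrable M f"
  shows "AE \<omega> in M. E \<sigma> (E \<nu> f) \<omega> = E \<sigma> f \<omega>"
  unfolding cexp_st_def
proof (rule sigma_finite_subalgebra.real_cond_exp_nested_subalg[OF pre_sfs[OF s] _ _ f])
  show "subalgebra M (pre_sigma \<nu>)" by (rule pre_subalg[OF n])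
  show "subalgebra (pre_sigma \<nu>) (pre_sigma \<sigma>)"
    using pre_mono[OF s n ae] by (simp add: subalgebra_def space_pre_sigma)
qed

lemma E_pull:
  assumes s: "stopping_time F \<sigma>" and "f \<in> borel_measurable (pre_sigma \<sigma>)" "g \<in> borel_measurable M"
    "integrable M (\<lambda>x. f x * g x)"
  shows "AE \<omega> in M. E \<sigma> (\<lambda>x. f x * g x) \<omega> = f \<omega> * E \<sigma> g \<omega>"
  unfolding cexp_st_def by (rule sigma_finite_subalgebra.real_cond_exp_mult[OF pre_sfs[OF s] assms(2-4)])

lemma E_mono:
  assumes s: "stopping_time F \<sigma>" and "AE x in M. f x \<le> g x" "integrable M f" "integrable M g"
  shows "AE \<omega> in M. E \<sigma> f \<omega> \<le> E \<sigma> g \<omega>"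
  unfolding cexp_st_def by (rule sigma_finite_subalgebra.real_cond_exp_mono[OF pre_sfs[OF s] assms(2-4)])

lemma E_pos:
  assumes s: "stopping_time F \<sigma>" and "AE x in M. 0 \<le> f x" "f \<in> borel_measurable M"
  shows "AE \<omega> in M. 0 \<le> E \<sigma> f \<omega>"
  unfolding cexp_st_def by (rule sigma_finite_subalgebra.real_cond_exp_pos[OF pre_sfs[OF s] assms(2-3)])

lemma E_cong:
  assumes s: "stopping_time F \<sigma>" and "AE x in M. f x = g x" "f \<in> borel_measurable M" "g \<in> borel_measurable M"
  shows "AE \<omega> in M. E \<sigma> f \<omega> = E \<sigma> g \<omega>"
  unfolding cexp_st_def by (rule sigma_finite_subalgebra.real_cond_exp_cong[OF pre_sfs[OF s] assms(2-4)])

lemma E_self: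
  assumes s: "stopping_time F \<sigma>" and "integrable M f" "f \<in> borel_measurable (pre_sigma \<sigma>)"
  shows "AE \<omega> in M. E \<sigma> f \<omega> = f \<omega>"
  unfolding cexp_st_def by (rule sigma_finite_subalgebra.real_cond_exp_F_meas[OF pre_sfs[OF s] assms(2-3)])

lemma E_zero:
  assumes s: "stopping_time F \<sigma>"
  shows "AE \<omega> in M. E \<sigma> (\<lambda>_. 0) \<omega> = 0"
  using E_self[OF s, of "\<lambda>_. 0"] by simp

lemma E_one:
  assumes s: "stopping_time F \<sigma>"
  shows "AE \<omega> in M. E \<sigma> (\<lambda>_. 1) \<omega> = 1"
  using E_self[OF s, of "\<lambda>_. 1"] by simp

lemma st_plus: assumes "stopping_time F \<nu>" "0 \<le> c" shows "stopping_time F (\<lambda>\<omega>. \<nu> \<omega> + c)"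
proof (rule stopping_timeI)
  fix t
  have "Measurable.pred (F (t - c)) (\<lambda>x. \<nu> x \<le> t - c)" by (rule stopping_timeD[OF assms(1)])
  then have "Measurable.pred (F t) (\<lambda>x. \<nu> x \<le> t - c)"
    using F_mono[of "t - c" t] assms(2) by (auto simp: pred_def F_space)
  then show "Measurable.pred (F t) (\<lambda>x. \<nu> x + c \<le> t)"
    by (simp add: le_diff_eq)
qed

lemma st_pre_meas: "stopping_time F \<nu> \<Longrightarrow> \<nu> \<in> borel_measurable (pre_sigma \<nu>)"
  by (rule measurable_stopping_time_pre_sigma)

end



lemma interval_facts:
  fixes f \<phi> :: "real \<Rightarrow> real"
  assumes \<phi>: "set_integrable lborel {0..T} \<phi>" and fm: "set_borel_measurable lborel {0..T} f"
    and b: "\<And>s. s \<in> {0..T} \<Longrightarrow> \<bar>f s\<bar> \<le> \<phi> s" and xy: "0 \<le> x" "x \<le> y" "y \<le> z" "z \<le> T"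
  shows "set_integrable lborel {x..y} f"
    and "(LINT s:{x..y}|lborel. f s) + (LINT s:{y..z}|lborel. f s) = (LINT s:{x..z}|lborel. f s)"
    and "\<bar>LINT s:{x..y}|lborel. f s\<bar> \<le> (LINT s:{x..y}|lborel. \<phi> s)"
proof -
  have fi: "set_integrable lborel {0..T} f"
  proof (rule set_integrable_bound[OF \<phi> fm])
    show "AE x in lborel. x \<in> {0..T} \<longrightarrow> norm (f x) \<le> norm (\<phi> x)"
      using b by (intro AE_I2) (smt (verit) real_norm_def)
  qed
  have sub: "set_integrable lborel {u..v} h" if "set_integrable lborel {0..T} h" "0 \<le> u" "v \<le> T" for u v and h :: "real \<Rightarrow> real"
    by (rule set_integrable_subset[OF that(1)]) (use that in auto)
  show 1: "set_integrable lborel {x..y} f" by (rule sub[OF fi]) (use xy in auto)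
  have 2: "set_integrable lborel {y..z} f" by (rule sub[OF fi]) (use xy in auto)
  have "(LINT s:{x..y} \<union> {y..z}|lborel. f s) = (LINT s:{x..y}|lborel. f s) + (LINT s:{y..z}|lborel. f s)"
  proof (rule set_integral_Un_AE[OF _ _ _ 1 2])
    show "AE s in lborel. \<not> (s \<in> {x..y} \<and> s \<in> {y..z})"
      using AE_lborel_singleton[of y] by eventually_elim auto
  qed auto
  moreover have "{x..y} \<union> {y..z} = {x..z}" using xy by auto
  ultimately show "(LINT s:{x..y}|lborel. f s) + (LINT s:{y..z}|lborel. f s) = (LINT s:{x..z}|lborel. f s)"
    by simp
  have "\<bar>LINT s:{x..y}|lborel. f s\<bar> \<le> (LINT s:{x..y}|lborel. norm (f s))"
    using set_integral_norm_bound[OF 1] by simp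
  also have "\<dots> \<le> (LINT s:{x..y}|lborel. \<phi> s)"
  proof (rule set_integral_mono)
    show "set_integrable lborel {x..y} (\<lambda>s. norm (f s))" using 1 by (rule set_integrable_norm)
    show "set_integrable lborel {x..y} \<phi>" by (rule sub[OF \<phi>]) (use xy in auto)
    show "\<And>s. s \<in> {x..y} \<Longrightarrow> norm (f s) \<le> \<phi> s" using b xy by auto
  qed
  finally show "\<bar>LINT s:{x..y}|lborel. f s\<bar> \<le> (LINT s:{x..y}|lborel. \<phi> s)" .
qed

context stp begin

lemma prog_sect:
  fixes h :: "real \<Rightarrow> 'a \<Rightarrow> real"
  assumes h: "progressive F T h" and w: "\<omega> \<in> space M"
  shows "set_borel_measurable lborel {0..T} (\<lambda>s. h s \<omega>)"
proof -
  have hm: "(\<lambda>(s,\<omega>). h s \<omega>) \<in> borel_measurable (restrict_space borel {0..T} \<Otimes>\<^sub>M F T)"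
    using h T_pos unfolding progressive_def by auto
  have "(\<lambda>s. (s, \<omega>)) \<in> restrict_space borel {0..T} \<rightarrow>\<^sub>M restrict_space borel {0..T} \<Otimes>\<^sub>M F T"
    using w by (intro measurable_Pair measurable_ident_sets[OF refl] measurable_const) (auto simp: F_space)
  from measurable_compose[OF this hm]
  have "(\<lambda>s. h s \<omega>) \<in> borel_measurable (restrict_space borel {0..T})" by simp
  then have "(\<lambda>s. indicator {0..T} s *\<^sub>R h s \<omega>) \<in> borel_measurable borel"
    by (subst (asm) borel_measurable_restrict_space_iff) auto
  then show ?thesis unfolding set_borel_measurable_def by simp
qed

end

locale sch = stp M F T for M :: "'a measure" and F T +
  fixes X :: "real \<Rightarrow> 'a \<Rightarrow> real^'l" and \<Delta> :: real and U :: "(real^'l) set" and \<psi> :: "real^'l \<Rightarrow> real"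
    and g :: "real \<Rightarrow> 'a \<Rightarrow> real^'l \<Rightarrow> real" and \<gamma> :: "real \<Rightarrow> 'a \<Rightarrow> real"
  assumes D_pos: "0 < \<Delta>" and fU: "finite U" and neU: "U \<noteq> {}" and psi: "\<And>x. 0 \<le> \<psi> x"
    and Xp: "progressive F T X" and gp: "progressive_param F T g" and \<gamma>p: "progressive F T \<gamma>"
    and \<gamma>pos: "\<And>t \<omega>. t \<in> {0..T} \<Longrightarrow> \<omega> \<in> space M \<Longrightarrow> 0 \<le> \<gamma> t \<omega>"
    and \<gamma>int: "AE \<omega> in M. set_integrable lborel {0..T} (\<lambda>s. \<gamma> s \<omega>)"
    and expint: "integrable M (\<lambda>\<omega>. exp (LINT s:{0..T}|lborel. \<gamma> s \<omega>))"
    and gb: "AE \<omega> in M. \<forall>t\<in>{0..T}. \<forall>x. \<bar>g t \<omega> x\<bar> \<le> \<gamma> t \<omega>"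
begin

definition kb :: "real^'l \<Rightarrow> real \<Rightarrow> 'a \<Rightarrow> real" where "kb b s \<omega> = g s \<omega> (X s \<omega> + b)"

abbreviation "Gm b \<rho> \<nu> \<equiv> Igr g X b \<rho> \<nu>"
abbreviation "\<Gamma> \<rho> \<nu> \<equiv> (\<lambda>\<omega>. LINT s:{\<rho> \<omega>..\<nu> \<omega>}|lborel. \<gamma> s \<omega>)"

lemma Gm_eq: "Gm b \<rho> \<nu> = (\<lambda>\<omega>. LINT s:{\<rho> \<omega>..\<nu> \<omega>}|lborel. kb b s \<omega>)"
  by (simp add: Igr_def kb_def fun_eq_iff)

lemma kb_prog: "progressive F T (kb b)"
  unfolding progressive_def
proof
  fix t assume "t \<in> {0..T}"
  let ?N = "restrict_space borel {0..t} \<Otimes>\<^sub>M F t"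
  have X: "(\<lambda>(s, \<omega>). X s \<omega>) \<in> borel_measurable ?N" using Xp \<open>t \<in> {0..T}\<close> unfolding progressive_def by auto
  have G: "(\<lambda>((s, \<omega>), x). g s \<omega> x) \<in> borel_measurable (?N \<Otimes>\<^sub>M borel)"
    using gp \<open>t \<in> {0..T}\<close> unfolding progressive_param_def by auto
  have X': "(\<lambda>p. X (fst p) (snd p) + b) \<in> borel_measurable ?N"
    using X unfolding case_prod_beta by (intro borel_measurable_add) auto
  have "(\<lambda>p. (p, X (fst p) (snd p) + b)) \<in> ?N \<rightarrow>\<^sub>M ?N \<Otimes>\<^sub>M borel"
    by (intro measurable_Pair measurable_ident_sets[OF refl] X')
  from measurable_compose[OF this G]
  show "(\<lambda>(s, \<omega>). kb b s \<omega>) \<in> borel_measurable ?N"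
    by (simp add: kb_def case_prod_beta)
qed

definition good :: "'a \<Rightarrow> bool" where
  "good \<omega> \<longleftrightarrow> \<omega> \<in> space M \<and> set_integrable lborel {0..T} (\<lambda>s. \<gamma> s \<omega>) \<and> (\<forall>t\<in>{0..T}. \<forall>x. \<bar>g t \<omega> x\<bar> \<le> \<gamma> t \<omega>)"

lemma AE_good: "AE \<omega> in M. good \<omega>"
  using \<gamma>int gb AE_space by eventually_elim (auto simp: good_def)

lemma good_facts:
  assumes "good \<omega>" and xy: "0 \<le> x" "x \<le> y" "y \<le> z" "z \<le> T"
  shows "(LINT s:{x..y}|lborel. \<gamma> s \<omega>) + (LINT s:{y..z}|lborel. \<gamma> s \<omega>) = (LINT s:{x..z}|lborel. \<gamma> s \<omega>)"
    and "(LINT s:{x..y}|lborel. kb b s \<omega>) + (LINT s:{y..z}|lborel. kb b s \<omega>) = (LINT s:{x..z}|lborel. kb b s \<omega>)"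
    and "\<bar>LINT s:{x..y}|lborel. kb b s \<omega>\<bar> \<le> (LINT s:{x..y}|lborel. \<gamma> s \<omega>)"
    and "0 \<le> (LINT s:{x..y}|lborel. \<gamma> s \<omega>)"
proof -
  have w: "\<omega> \<in> space M" and i: "set_integrable lborel {0..T} (\<lambda>s. \<gamma> s \<omega>)"
    and gb': "\<And>t x. t \<in> {0..T} \<Longrightarrow> \<bar>g t \<omega> x\<bar> \<le> \<gamma> t \<omega>" using assms(1) by (auto simp: good_def)
  have bg: "\<And>s. s \<in> {0..T} \<Longrightarrow> \<bar>\<gamma> s \<omega>\<bar> \<le> \<gamma> s \<omega>" using \<gamma>pos w by auto
  have bk: "\<And>s. s \<in> {0..T} \<Longrightarrow> \<bar>kb b s \<omega>\<bar> \<le> \<gamma> s \<omega>" using gb' by (auto simp: kb_def)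
  note G = interval_facts[OF i prog_sect[OF \<gamma>p w] bg xy]
  note K = interval_facts[OF i prog_sect[OF kb_prog w] bk xy]
  show "(LINT s:{x..y}|lborel. \<gamma> s \<omega>) + (LINT s:{y..z}|lborel. \<gamma> s \<omega>) = (LINT s:{x..z}|lborel. \<gamma> s \<omega>)"
    by (rule G(2))
  show "(LINT s:{x..y}|lborel. kb b s \<omega>) + (LINT s:{y..z}|lborel. kb b s \<omega>) = (LINT s:{x..z}|lborel. kb b s \<omega>)"
    by (rule K(2))
  show "\<bar>LINT s:{x..y}|lborel. kb b s \<omega>\<bar> \<le> (LINT s:{x..y}|lborel. \<gamma> s \<omega>)" by (rule K(3))
  show "0 \<le> (LINT s:{x..y}|lborel. \<gamma> s \<omega>)" using G(3) by linarith
qed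

lemma good_le0:
  assumes "good \<omega>" "0 \<le> x" "x \<le> T"
  shows "(LINT s:{x..T}|lborel. \<gamma> s \<omega>) \<le> (LINT s:{0..T}|lborel. \<gamma> s \<omega>)"
  using good_facts(1,4)[OF assms(1) order_refl assms(2) assms(3) order_refl] assms by linarith

lemma \<Gamma>_meas:
  assumes "stopping_time F \<rho>" "stopping_time F \<nu>" "AE \<omega> in M. 0 \<le> \<rho> \<omega> \<and> \<rho> \<omega> \<le> \<nu> \<omega> \<and> \<nu> \<omega> \<le> T"
  shows "\<Gamma> \<rho> \<nu> \<in> borel_measurable (pre_sigma \<nu>)"
  by (rule int_meas[OF \<gamma>p assms])

lemma Gm_meas:
  assumes "stopping_time F \<rho>" "stopping_time F \<nu>" "AE \<omega> in M. 0 \<le> \<rho> \<omega> \<and> \<rho> \<omega> \<le> \<nu> \<omega> \<and> \<nu> \<omega> \<le> T"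
  shows "Gm b \<rho> \<nu> \<in> borel_measurable (pre_sigma \<nu>)"
  unfolding Gm_eq by (rule int_meas[OF kb_prog assms])

end



context sch begin

abbreviation "Y \<equiv> Ysch M F T X \<Delta> U \<psi> g"
abbreviation "Bnd \<rho> \<equiv> E \<rho> (\<lambda>\<omega>. exp (\<Gamma> \<rho> (\<lambda>_. T) \<omega>))"
abbreviation "Ost \<equiv> O_step M F T X \<Delta> U \<psi> g"
definition "ST \<rho> \<longleftrightarrow> stopping_time F \<rho> \<and> (AE \<omega> in M. 0 \<le> \<rho> \<omega> \<and> \<rho> \<omega> \<le> T)"

lemma int_by:
  assumes "f \<in> borel_measurable M" "AE \<omega> in M. \<bar>f \<omega>\<bar> \<le> exp (LINT s:{0..T}|lborel. \<gamma> s \<omega>)"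
  shows "integrable M f"
  using assms(2) by (intro Bochner_Integration.integrable_bound[OF expint assms(1)]) auto

lemma mono_pre:
  assumes "stopping_time F \<sigma>" "stopping_time F \<nu>" "AE \<omega> in M. \<sigma> \<omega> \<le> \<nu> \<omega>"
    "f \<in> borel_measurable (pre_sigma \<sigma>)"
  shows "f \<in> borel_measurable (pre_sigma \<nu>)"
proof -
  have "subalgebra (pre_sigma \<nu>) (pre_sigma \<sigma>)"
    using pre_mono[OF assms(1-3)] by (simp add: subalgebra_def space_pre_sigma)
  from measurable_from_subalg[OF this assms(4)] show ?thesis .
qed

lemma ST_T: "ST (\<lambda>_. T)" using T_pos by (simp add: ST_def stopping_time_const)

lemma ST_st: "ST \<rho> \<Longrightarrow> stopping_time F \<rho>" by (simp add: ST_def)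
lemma ST_ae: "ST \<rho> \<Longrightarrow> AE \<omega> in M. 0 \<le> \<rho> \<omega> \<and> \<rho> \<omega> \<le> T" by (simp add: ST_def)

lemma \<Gamma>T_meas: "ST \<rho> \<Longrightarrow> \<Gamma> \<rho> (\<lambda>_. T) \<in> borel_measurable M"
  unfolding ST_def
  by (rule pre_meas_M[OF stopping_time_const[of F T]], rule \<Gamma>_meas) (auto simp: stopping_time_const elim!: AE_mp)

lemma GmT_meas: "ST \<rho> \<Longrightarrow> Gm b \<rho> (\<lambda>_. T) \<in> borel_measurable M"
  unfolding ST_def
  by (rule pre_meas_M[OF stopping_time_const[of F T]], rule Gm_meas) (auto simp: stopping_time_const elim!: AE_mp)

lemma exp\<Gamma>T_int: assumes "ST \<rho>" shows "integrable M (\<lambda>\<omega>. exp (\<Gamma> \<rho> (\<lambda>_. T) \<omega>))"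
proof (rule int_by)
  show "(\<lambda>\<omega>. exp (\<Gamma> \<rho> (\<lambda>_. T) \<omega>)) \<in> borel_measurable M"
    using \<Gamma>T_meas[OF assms] by measurable
  show "AE \<omega> in M. \<bar>exp (\<Gamma> \<rho> (\<lambda>_. T) \<omega>)\<bar> \<le> exp (LINT s:{0..T}|lborel. \<gamma> s \<omega>)"
    using AE_good ST_ae[OF assms]
  proof (eventually_elim)
    case (elim \<omega>) then show ?case using good_le0[of \<omega> "\<rho> \<omega>"] by simp
  qed
qed

lemma expGmT_int: assumes "ST \<rho>" shows "integrable M (\<lambda>\<omega>. exp (Gm b \<rho> (\<lambda>_. T) \<omega>))"
proof (rule int_by)
  show "(\<lambda>\<omega>. exp (Gm b \<rho> (\<lambda>_. T) \<omega>)) \<in> borel_measurable M"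
    using GmT_meas[OF assms] by measurable
  show "AE \<omega> in M. \<bar>exp (Gm b \<rho> (\<lambda>_. T) \<omega>)\<bar> \<le> exp (LINT s:{0..T}|lborel. \<gamma> s \<omega>)"
    using AE_good ST_ae[OF assms]
  proof (eventually_elim)
    case (elim \<omega>)
    have "Gm b \<rho> (\<lambda>_. T) \<omega> \<le> \<Gamma> \<rho> (\<lambda>_. T) \<omega>"
      using good_facts(3)[of \<omega> "\<rho> \<omega>" T T b] elim by (simp add: Gm_eq)
    then show ?case using good_le0[of \<omega> "\<rho> \<omega>"] elim by simp
  qed
qed

lemma expGmT_le: assumes "ST \<rho>" shows "AE \<omega> in M. exp (Gm b \<rho> (\<lambda>_. T) \<omega>) \<le> exp (\<Gamma> \<rho> (\<lambda>_. T) \<omega>)"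
  using AE_good ST_ae[OF assms]
proof (eventually_elim)
  case (elim \<omega>)
  have "Gm b \<rho> (\<lambda>_. T) \<omega> \<le> \<Gamma> \<rho> (\<lambda>_. T) \<omega>"
    using good_facts(3)[of \<omega> "\<rho> \<omega>" T T b] elim by (simp add: Gm_eq)
  then show ?case by simp
qed

lemma Bnd_int: "ST \<rho> \<Longrightarrow> integrable M (Bnd \<rho>)"
  by (rule E_int[OF ST_st exp\<Gamma>T_int])

lemma Bnd_pos: "ST \<rho> \<Longrightarrow> AE \<omega> in M. 0 \<le> Bnd \<rho> \<omega>"
  by (rule E_pos[OF ST_st]) (auto intro: borel_measurable_integrable[OF exp\<Gamma>T_int])

lemma Y0_eq: "Y 0 \<rho> b = E \<rho> (\<lambda>\<omega>. exp (Gm b \<rho> (\<lambda>_. T) \<omega>))" by simp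

lemma Y0_props:
  assumes "ST \<rho>"
  shows "AE \<omega> in M. 0 \<le> Y 0 \<rho> b \<omega> \<and> Y 0 \<rho> b \<omega> \<le> Bnd \<rho> \<omega>"
proof -
  have "AE \<omega> in M. 0 \<le> Y 0 \<rho> b \<omega>"
    unfolding Y0_eq by (rule E_pos[OF ST_st[OF assms]]) (auto intro: borel_measurable_integrable[OF expGmT_int[OF assms]])
  moreover have "AE \<omega> in M. Y 0 \<rho> b \<omega> \<le> Bnd \<rho> \<omega>"
    unfolding Y0_eq by (rule E_mono[OF ST_st[OF assms] expGmT_le[OF assms] expGmT_int[OF assms] exp\<Gamma>T_int[OF assms]])
  ultimately show ?thesis by eventually_elim auto
qed

lemma O_props:
  assumes IH: "\<forall>\<rho> b. ST \<rho> \<longrightarrow> Y m \<rho> b \<in> borel_measurable M \<and> (AE \<omega> in M. 0 \<le> Y m \<rho> b \<omega> \<and> Y m \<rho> b \<omega> \<le> Bnd \<rho> \<omega>)"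
    and STn: "ST \<nu>"
  shows "Ost (Y m) \<nu> b \<in> borel_measurable M" "AE \<omega> in M. 0 \<le> Ost (Y m) \<nu> b \<omega>"
    "AE \<omega> in M. Ost (Y m) \<nu> b \<omega> \<le> Bnd \<nu> \<omega>"
proof -
  define \<nu>' where "\<nu>' \<omega> = min (\<nu> \<omega> + \<Delta>) T" for \<omega>
  have n: "stopping_time F \<nu>" using STn by (rule ST_st)
  have aen: "AE \<omega> in M. 0 \<le> \<nu> \<omega> \<and> \<nu> \<omega> \<le> T" using STn by (rule ST_ae)
  have n': "stopping_time F \<nu>'" unfolding \<nu>'_def
    using D_pos by (intro stopping_time_min st_plus n stopping_time_const) auto
  have ae': "AE \<omega> in M. 0 \<le> \<nu> \<omega> \<and> \<nu> \<omega> \<le> \<nu>' \<omega> \<and> \<nu>' \<omega> \<le> T"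
    using aen by eventually_elim (use D_pos in \<open>auto simp: \<nu>'_def\<close>)
  have STn': "ST \<nu>'" unfolding ST_def using n' ae' by (auto elim: AE_mp)
  have nm[measurable]: "\<nu> \<in> borel_measurable M" by (rule st_meas[OF n])
  have Gmm: "Gm b \<nu> \<nu>' \<in> borel_measurable (pre_sigma \<nu>')" by (rule Gm_meas[OF n n' ae'])
  have Gmm'[measurable]: "Gm b \<nu> \<nu>' \<in> borel_measurable M" by (rule pre_meas_M[OF n' Gmm])
  have \<Gamma>m: "\<Gamma> \<nu> \<nu>' \<in> borel_measurable (pre_sigma \<nu>')" by (rule \<Gamma>_meas[OF n n' ae'])
  have \<Gamma>m'[measurable]: "\<Gamma> \<nu> \<nu>' \<in> borel_measurable M" by (rule pre_meas_M[OF n' \<Gamma>m])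
  have Ym[measurable]: "Y m \<nu>' (b + \<beta>) \<in> borel_measurable M" for \<beta> using IH STn' by blast
  have \<Gamma>Tm'[measurable]: "\<Gamma> \<nu>' (\<lambda>_. T) \<in> borel_measurable M" by (rule \<Gamma>T_meas[OF STn'])
  have \<Gamma>Tm[measurable]: "\<Gamma> \<nu> (\<lambda>_. T) \<in> borel_measurable M" by (rule \<Gamma>T_meas[OF STn])
  define I1 :: "'a \<Rightarrow> real" where "I1 \<omega> = indicator {\<omega>''. \<nu> \<omega>'' < T - \<Delta>} \<omega>" for \<omega> :: 'a
  define I2 :: "'a \<Rightarrow> real" where "I2 \<omega> = indicator {\<omega>''. T - \<Delta> \<le> \<nu> \<omega>'' \<and> \<nu> \<omega>'' \<le> T} \<omega>" for \<omega> :: 'a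
  have I1_eq: "I1 = (\<lambda>\<omega>. if \<nu> \<omega> < T - \<Delta> then 1 else 0)" by (auto simp: I1_def fun_eq_iff)
  have I2_eq: "I2 = (\<lambda>\<omega>. if T - \<Delta> \<le> \<nu> \<omega> \<and> \<nu> \<omega> \<le> T then 1 else 0)" by (auto simp: I2_def fun_eq_iff)
  have I1m[measurable]: "I1 \<in> borel_measurable M" unfolding I1_eq by measurable
  have I2m[measurable]: "I2 \<in> borel_measurable M" unfolding I2_eq by measurable
  have I1pre: "I1 \<in> borel_measurable (pre_sigma \<nu>)" unfolding I1_eq
    using st_pre_meas[OF n] by measurable
  define A where "A \<omega>' = I1 \<omega>' * Max ((\<lambda>\<beta>. exp (Gm b \<nu> \<nu>' \<omega>' - \<psi> \<beta>) * Y m \<nu>' (b + \<beta>) \<omega>') ` U)" for \<omega>'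
  have O_eq: "Ost (Y m) \<nu> b = (\<lambda>\<omega>. E \<nu> A \<omega> + I2 \<omega> * E \<nu> (\<lambda>\<omega>'. exp (Gm b \<nu> (\<lambda>_. T) \<omega>')) \<omega>)"
  proof -
    have "(\<lambda>\<omega>'. indicator {\<omega>''. \<nu> \<omega>'' < T - \<Delta>} \<omega>' *
               Max ((\<lambda>\<beta>. exp (Gm b \<nu> (\<lambda>\<omega>''. \<nu> \<omega>'' + \<Delta>) \<omega>' - \<psi> \<beta>)
                          * Y m (\<lambda>\<omega>''. min (\<nu> \<omega>'' + \<Delta>) T) (b + \<beta>) \<omega>') ` U)) = A"
    proof
      fix \<omega>
      show "indicator {\<omega>''. \<nu> \<omega>'' < T - \<Delta>} \<omega> *
               Max ((\<lambda>\<beta>. exp (Gm b \<nu> (\<lambda>\<omega>''. \<nu> \<omega>'' + \<Delta>) \<omega> - \<psi> \<beta>)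
                          * Y m (\<lambda>\<omega>''. min (\<nu> \<omega>'' + \<Delta>) T) (b + \<beta>) \<omega>) ` U) = A \<omega>"
      proof (cases "\<nu> \<omega> < T - \<Delta>")
        case True
        then have "Gm b \<nu> (\<lambda>\<omega>''. \<nu> \<omega>'' + \<Delta>) \<omega> = Gm b \<nu> \<nu>' \<omega>"
          by (simp add: Igr_def \<nu>'_def)
        then show ?thesis by (simp add: A_def I1_def \<nu>'_def[abs_def])
      qed (simp add: A_def I1_def)
    qed
    then show ?thesis unfolding O_step_def I2_def by simp
  qed
  have Am[measurable]: "A \<in> borel_measurable M"
  proof -
    have "(\<lambda>\<omega>. Max ((\<lambda>\<beta>. exp (Gm b \<nu> \<nu>' \<omega> - \<psi> \<beta>) * Y m \<nu>' (b + \<beta>) \<omega>) ` U)) \<in> borel_measurable M"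
      by (rule borel_measurable_Max[OF fU]) measurable
    then show ?thesis unfolding A_def by measurable
  qed
  have aeY: "AE \<omega> in M. \<forall>\<beta>\<in>U. 0 \<le> Y m \<nu>' (b + \<beta>) \<omega> \<and> Y m \<nu>' (b + \<beta>) \<omega> \<le> Bnd \<nu>' \<omega>"
    using fU IH STn' by (intro AE_finite_allI) auto
  define H where "H \<omega> = I1 \<omega> * exp (\<Gamma> \<nu> \<nu>' \<omega>)" for \<omega>
  have Hm[measurable]: "H \<in> borel_measurable M" unfolding H_def by measurable
  have Hpre: "H \<in> borel_measurable (pre_sigma \<nu>')"
  proof -
    have "I1 \<in> borel_measurable (pre_sigma \<nu>')"
      by (rule mono_pre[OF n n' _ I1pre]) (use ae' in \<open>auto elim: AE_mp\<close>)
    then show ?thesis unfolding H_def using \<Gamma>m by measurable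
  qed
  have A_pos: "AE \<omega> in M. 0 \<le> A \<omega>" using aeY
  proof eventually_elim
    case (elim \<omega>)
    obtain \<beta> where "\<beta> \<in> U" using neU by auto
    then have "0 \<le> exp (Gm b \<nu> \<nu>' \<omega> - \<psi> \<beta>) * Y m \<nu>' (b + \<beta>) \<omega>" using elim by auto
    also have "\<dots> \<le> Max ((\<lambda>\<beta>. exp (Gm b \<nu> \<nu>' \<omega> - \<psi> \<beta>) * Y m \<nu>' (b + \<beta>) \<omega>) ` U)"
      using fU \<open>\<beta> \<in> U\<close> by (intro Max_ge) auto
    finally show ?case by (simp add: A_def I1_def)
  qed
  have A_le: "AE \<omega> in M. A \<omega> \<le> H \<omega> * Bnd \<nu>' \<omega>" using aeY AE_good ae' Bnd_pos[OF STn']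
  proof eventually_elim
    case (elim \<omega>)
    show ?case
    proof (cases "\<nu> \<omega> < T - \<Delta>")
      case False then show ?thesis by (simp add: A_def H_def I1_def)
    next
      case True
      have G: "Gm b \<nu> \<nu>' \<omega> \<le> \<Gamma> \<nu> \<nu>' \<omega>"
        using good_facts(3)[of \<omega> "\<nu> \<omega>" "\<nu>' \<omega>" T b] elim by (simp add: Gm_eq)
      have "Max ((\<lambda>\<beta>. exp (Gm b \<nu> \<nu>' \<omega> - \<psi> \<beta>) * Y m \<nu>' (b + \<beta>) \<omega>) ` U) \<le> exp (\<Gamma> \<nu> \<nu>' \<omega>) * Bnd \<nu>' \<omega>"
      proof (subst Max_le_iff, safe)
        fix \<beta> assume "\<beta> \<in> U"
        have "exp (Gm b \<nu> \<nu>' \<omega> - \<psi> \<beta>) \<le> exp (\<Gamma> \<nu> \<nu>' \<omega>)" using G psi[of \<beta>] by simp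
        then show "exp (Gm b \<nu> \<nu>' \<omega> - \<psi> \<beta>) * Y m \<nu>' (b + \<beta>) \<omega> \<le> exp (\<Gamma> \<nu> \<nu>' \<omega>) * Bnd \<nu>' \<omega>"
          using elim \<open>\<beta> \<in> U\<close> by (intro mult_mono) auto
      qed (use fU neU in auto)
      then show ?thesis using True by (simp add: A_def H_def I1_def)
    qed
  qed
  have HgI: "AE \<omega> in M. H \<omega> * exp (\<Gamma> \<nu>' (\<lambda>_. T) \<omega>) = I1 \<omega> * exp (\<Gamma> \<nu> (\<lambda>_. T) \<omega>)"
    using AE_good ae'
  proof eventually_elim
    case (elim \<omega>)
    have "\<Gamma> \<nu> \<nu>' \<omega> + \<Gamma> \<nu>' (\<lambda>_. T) \<omega> = \<Gamma> \<nu> (\<lambda>_. T) \<omega>"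
      using good_facts(1)[of \<omega> "\<nu> \<omega>" "\<nu>' \<omega>" T] elim by simp
    then show ?case by (simp add: H_def flip: exp_add)
  qed
  have I1T_int: "integrable M (\<lambda>\<omega>. I1 \<omega> * exp (\<Gamma> \<nu> (\<lambda>_. T) \<omega>))"
  proof (rule int_by)
    show "AE \<omega> in M. \<bar>I1 \<omega> * exp (\<Gamma> \<nu> (\<lambda>_. T) \<omega>)\<bar> \<le> exp (LINT s:{0..T}|lborel. \<gamma> s \<omega>)"
      using AE_good aen
    proof eventually_elim
      case (elim \<omega>) then show ?case using good_le0[of \<omega> "\<nu> \<omega>"] by (simp add: I1_def indicator_def)
    qed
  qed measurable
  have HgT_int: "integrable M (\<lambda>\<omega>. H \<omega> * exp (\<Gamma> \<nu>' (\<lambda>_. T) \<omega>))"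
    by (rule integrable_cong_AE_imp[OF I1T_int]) (use HgI in \<open>auto elim: AE_mp\<close>)
  have pull1: "AE \<omega> in M. E \<nu>' (\<lambda>\<omega>. H \<omega> * exp (\<Gamma> \<nu>' (\<lambda>_. T) \<omega>)) \<omega> = H \<omega> * Bnd \<nu>' \<omega>"
    by (rule E_pull[OF n' Hpre _ HgT_int]) measurable
  have HB_int: "integrable M (\<lambda>\<omega>. H \<omega> * Bnd \<nu>' \<omega>)"
    by (rule integrable_cong_AE_imp[OF E_int[OF n' HgT_int]]) (use pull1 in auto)
  have A_int: "integrable M A"
  proof (rule Bochner_Integration.integrable_bound[OF HB_int Am])
    show "AE x in M. norm (A x) \<le> norm (H x * Bnd \<nu>' x)" using A_pos A_le by eventually_elim auto
  qed
  have c1: "AE \<omega> in M. E \<nu> A \<omega> \<le> E \<nu> (\<lambda>\<omega>. H \<omega> * Bnd \<nu>' \<omega>) \<omega>"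
    by (rule E_mono[OF n A_le A_int HB_int])
  have c2: "AE \<omega> in M. E \<nu> (\<lambda>\<omega>. H \<omega> * Bnd \<nu>' \<omega>) \<omega> = E \<nu> (E \<nu>' (\<lambda>\<omega>. H \<omega> * exp (\<Gamma> \<nu>' (\<lambda>_. T) \<omega>))) \<omega>"
    by (rule E_cong[OF n]) (use pull1 in \<open>auto elim: AE_mp\<close>)
  have c3: "AE \<omega> in M. E \<nu> (E \<nu>' (\<lambda>\<omega>. H \<omega> * exp (\<Gamma> \<nu>' (\<lambda>_. T) \<omega>))) \<omega> = E \<nu> (\<lambda>\<omega>. H \<omega> * exp (\<Gamma> \<nu>' (\<lambda>_. T) \<omega>)) \<omega>"
    by (rule E_tower[OF n n' _ HgT_int]) (use ae' in \<open>auto elim: AE_mp\<close>)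
  have c4: "AE \<omega> in M. E \<nu> (\<lambda>\<omega>. H \<omega> * exp (\<Gamma> \<nu>' (\<lambda>_. T) \<omega>)) \<omega> = E \<nu> (\<lambda>\<omega>. I1 \<omega> * exp (\<Gamma> \<nu> (\<lambda>_. T) \<omega>)) \<omega>"
    by (rule E_cong[OF n HgI]) measurable
  have c5: "AE \<omega> in M. E \<nu> (\<lambda>\<omega>. I1 \<omega> * exp (\<Gamma> \<nu> (\<lambda>_. T) \<omega>)) \<omega> = I1 \<omega> * Bnd \<nu> \<omega>"
    by (rule E_pull[OF n I1pre _ I1T_int]) measurable
  have c6: "AE \<omega> in M. E \<nu> (\<lambda>\<omega>'. exp (Gm b \<nu> (\<lambda>_. T) \<omega>')) \<omega> \<le> Bnd \<nu> \<omega>"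
    by (rule E_mono[OF n expGmT_le[OF STn] expGmT_int[OF STn] exp\<Gamma>T_int[OF STn]])
  have c7: "AE \<omega> in M. 0 \<le> E \<nu> A \<omega>" by (rule E_pos[OF n A_pos Am])
  have c8: "AE \<omega> in M. 0 \<le> E \<nu> (\<lambda>\<omega>'. exp (Gm b \<nu> (\<lambda>_. T) \<omega>')) \<omega>"
    by (rule E_pos[OF n]) (auto intro: borel_measurable_integrable[OF expGmT_int[OF STn]])
  show "Ost (Y m) \<nu> b \<in> borel_measurable M" unfolding O_eq by measurable
  show "AE \<omega> in M. 0 \<le> Ost (Y m) \<nu> b \<omega>" unfolding O_eq using c7 c8
    by eventually_elim (auto simp: I2_def)
  show "AE \<omega> in M. Ost (Y m) \<nu> b \<omega> \<le> Bnd \<nu> \<omega>" unfolding O_eq using c1 c2 c3 c4 c5 c6 Bnd_pos[OF STn]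
  proof eventually_elim
    case (elim \<omega>)
    then have "E \<nu> A \<omega> \<le> I1 \<omega> * Bnd \<nu> \<omega>" by simp
    moreover have "I2 \<omega> * E \<nu> (\<lambda>\<omega>'. exp (Gm b \<nu> (\<lambda>_. T) \<omega>')) \<omega> \<le> I2 \<omega> * Bnd \<nu> \<omega>"
      using elim by (intro mult_left_mono) (auto simp: I2_def)
    moreover have "I1 \<omega> * Bnd \<nu> \<omega> + I2 \<omega> * Bnd \<nu> \<omega> \<le> Bnd \<nu> \<omega>"
      using elim by (auto simp: I1_def I2_def indicator_def)
    ultimately show ?case by linarith
  qed
qed


lemma stf_ST:
  assumes "ST \<rho>" "\<nu> \<in> stopping_times_from M F T \<rho>"
  shows "ST \<nu>" "stopping_time F \<nu>" "AE \<omega> in M. 0 \<le> \<rho> \<omega> \<and> \<rho> \<omega> \<le> \<nu> \<omega> \<and> \<nu> \<omega> \<le> T"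
proof -
  show n: "stopping_time F \<nu>" using assms(2) by (simp add: stopping_times_from_def)
  show ae: "AE \<omega> in M. 0 \<le> \<rho> \<omega> \<and> \<rho> \<omega> \<le> \<nu> \<omega> \<and> \<nu> \<omega> \<le> T"
    using ST_ae[OF assms(1)] assms(2) unfolding stopping_times_from_def
    by (auto elim: AE_mp)
  show "ST \<nu>" unfolding ST_def using n ae by (auto elim: AE_mp)
qed

lemma member_props:
  assumes IH: "\<forall>\<rho> b. ST \<rho> \<longrightarrow> Y m \<rho> b \<in> borel_measurable M \<and> (AE \<omega> in M. 0 \<le> Y m \<rho> b \<omega> \<and> Y m \<rho> b \<omega> \<le> Bnd \<rho> \<omega>)"
    and STr: "ST \<rho>" and nu: "\<nu> \<in> stopping_times_from M F T \<rho>"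
  shows "AE \<omega> in M. 0 \<le> E \<rho> (\<lambda>\<omega>. exp (Gm b \<rho> \<nu> \<omega>) * Ost (Y m) \<nu> b \<omega>) \<omega> \<and>
             E \<rho> (\<lambda>\<omega>. exp (Gm b \<rho> \<nu> \<omega>) * Ost (Y m) \<nu> b \<omega>) \<omega> \<le> Bnd \<rho> \<omega>"
proof -
  have STn: "ST \<nu>" and n: "stopping_time F \<nu>" and ae: "AE \<omega> in M. 0 \<le> \<rho> \<omega> \<and> \<rho> \<omega> \<le> \<nu> \<omega> \<and> \<nu> \<omega> \<le> T"
    using stf_ST[OF STr nu] by auto
  have r: "stopping_time F \<rho>" by (rule ST_st[OF STr])
  note O = O_props[where m=m and \<nu>=\<nu> and b=b, OF IH STn]
  have Om[measurable]: "Ost (Y m) \<nu> b \<in> borel_measurable M" by (rule O(1))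
  have \<Gamma>m: "\<Gamma> \<rho> \<nu> \<in> borel_measurable (pre_sigma \<nu>)" by (rule \<Gamma>_meas[OF r n ae])
  have \<Gamma>m'[measurable]: "\<Gamma> \<rho> \<nu> \<in> borel_measurable M" by (rule pre_meas_M[OF n \<Gamma>m])
  have Gmm[measurable]: "Gm b \<rho> \<nu> \<in> borel_measurable M" by (rule pre_meas_M[OF n Gm_meas[OF r n ae]])
  have \<Gamma>Tm[measurable]: "\<Gamma> \<nu> (\<lambda>_. T) \<in> borel_measurable M" by (rule \<Gamma>T_meas[OF STn])
  have \<Gamma>Tm'[measurable]: "\<Gamma> \<rho> (\<lambda>_. T) \<in> borel_measurable M" by (rule \<Gamma>T_meas[OF STr])
  have fg: "AE \<omega> in M. exp (\<Gamma> \<rho> \<nu> \<omega>) * exp (\<Gamma> \<nu> (\<lambda>_. T) \<omega>) = exp (\<Gamma> \<rho> (\<lambda>_. T) \<omega>)"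
    using AE_good ae
  proof eventually_elim
    case (elim \<omega>)
    have "\<Gamma> \<rho> \<nu> \<omega> + \<Gamma> \<nu> (\<lambda>_. T) \<omega> = \<Gamma> \<rho> (\<lambda>_. T) \<omega>"
      using good_facts(1)[of \<omega> "\<rho> \<omega>" "\<nu> \<omega>" T] elim by simp
    then show ?case by (simp flip: exp_add)
  qed
  have fg_int: "integrable M (\<lambda>\<omega>. exp (\<Gamma> \<rho> \<nu> \<omega>) * exp (\<Gamma> \<nu> (\<lambda>_. T) \<omega>))"
    by (rule integrable_cong_AE_imp[OF exp\<Gamma>T_int[OF STr]]) (use fg in \<open>auto elim: AE_mp\<close>)
  have pull: "AE \<omega> in M. E \<nu> (\<lambda>\<omega>. exp (\<Gamma> \<rho> \<nu> \<omega>) * exp (\<Gamma> \<nu> (\<lambda>_. T) \<omega>)) \<omega> = exp (\<Gamma> \<rho> \<nu> \<omega>) * Bnd \<nu> \<omega>"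
  proof (rule E_pull[OF n _ _ fg_int])
    show "(\<lambda>\<omega>. exp (\<Gamma> \<rho> \<nu> \<omega>)) \<in> borel_measurable (pre_sigma \<nu>)"
      by (rule measurable_compose[OF \<Gamma>m borel_measurable_exp])
  qed measurable
  have fB_int: "integrable M (\<lambda>\<omega>. exp (\<Gamma> \<rho> \<nu> \<omega>) * Bnd \<nu> \<omega>)"
    by (rule integrable_cong_AE_imp[OF E_int[OF n fg_int]]) (use pull in auto)
  have P_le: "AE \<omega> in M. exp (Gm b \<rho> \<nu> \<omega>) * Ost (Y m) \<nu> b \<omega> \<le> exp (\<Gamma> \<rho> \<nu> \<omega>) * Bnd \<nu> \<omega>"
    using AE_good ae O(2) O(3)
  proof eventually_elim
    case (elim \<omega>)
    have "Gm b \<rho> \<nu> \<omega> \<le> \<Gamma> \<rho> \<nu> \<omega>"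
      using good_facts(3)[of \<omega> "\<rho> \<omega>" "\<nu> \<omega>" T b] elim by (simp add: Gm_eq)
    then show ?case using elim by (intro mult_mono) auto
  qed
  have P_pos: "AE \<omega> in M. 0 \<le> exp (Gm b \<rho> \<nu> \<omega>) * Ost (Y m) \<nu> b \<omega>"
    using O(2) by eventually_elim auto
  have P_int: "integrable M (\<lambda>\<omega>. exp (Gm b \<rho> \<nu> \<omega>) * Ost (Y m) \<nu> b \<omega>)"
  proof (rule Bochner_Integration.integrable_bound[OF fB_int])
    show "AE x in M. norm (exp (Gm b \<rho> \<nu> x) * Ost (Y m) \<nu> b x) \<le> norm (exp (\<Gamma> \<rho> \<nu> x) * Bnd \<nu> x)"
      using P_le P_pos by eventually_elim auto
  qed measurable
  have c1: "AE \<omega> in M. E \<rho> (\<lambda>\<omega>. exp (Gm b \<rho> \<nu> \<omega>) * Ost (Y m) \<nu> b \<omega>) \<omega> \<le> E \<rho> (\<lambda>\<omega>. exp (\<Gamma> \<rho> \<nu> \<omega>) * Bnd \<nu> \<omega>) \<omega>"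
    by (rule E_mono[OF r P_le P_int fB_int])
  have c2: "AE \<omega> in M. E \<rho> (\<lambda>\<omega>. exp (\<Gamma> \<rho> \<nu> \<omega>) * Bnd \<nu> \<omega>) \<omega> = E \<rho> (E \<nu> (\<lambda>\<omega>. exp (\<Gamma> \<rho> \<nu> \<omega>) * exp (\<Gamma> \<nu> (\<lambda>_. T) \<omega>))) \<omega>"
    by (rule E_cong[OF r]) (use pull in \<open>auto elim: AE_mp\<close>)
  have c3: "AE \<omega> in M. E \<rho> (E \<nu> (\<lambda>\<omega>. exp (\<Gamma> \<rho> \<nu> \<omega>) * exp (\<Gamma> \<nu> (\<lambda>_. T) \<omega>))) \<omega> = E \<rho> (\<lambda>\<omega>. exp (\<Gamma> \<rho> \<nu> \<omega>) * exp (\<Gamma> \<nu> (\<lambda>_. T) \<omega>)) \<omega>"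
    by (rule E_tower[OF r n _ fg_int]) (use ae in \<open>auto elim: AE_mp\<close>)
  have c4: "AE \<omega> in M. E \<rho> (\<lambda>\<omega>. exp (\<Gamma> \<rho> \<nu> \<omega>) * exp (\<Gamma> \<nu> (\<lambda>_. T) \<omega>)) \<omega> = Bnd \<rho> \<omega>"
    by (rule E_cong[OF r fg]) measurable
  have c5: "AE \<omega> in M. 0 \<le> E \<rho> (\<lambda>\<omega>. exp (Gm b \<rho> \<nu> \<omega>) * Ost (Y m) \<nu> b \<omega>) \<omega>"
    by (rule E_pos[OF r P_pos]) measurable
  show ?thesis using c1 c2 c3 c4 c5 by eventually_elim simp
qed

lemma Igr_TT: "Igr h X' a (\<lambda>_. T) (\<lambda>_. T) \<omega> = 0"
proof -
  have "(LINT s:{T..T}|lborel. h s \<omega> (X' s \<omega> + a)) = 0"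
    unfolding set_lebesgue_integral_def
  proof (rule integral_eq_zero_AE)
    show "AE s in lborel. indicator {T..T} s *\<^sub>R h s \<omega> (X' s \<omega> + a) = 0"
      using AE_lborel_singleton[of T] by eventually_elim auto
  qed
  then show ?thesis by (simp add: Igr_def)
qed

lemma member_T:
  assumes STr: "ST \<rho>"
  shows "AE \<omega> in M. E \<rho> (\<lambda>\<omega>. exp (Gm b \<rho> (\<lambda>_. T) \<omega>) * Ost Yp (\<lambda>_. T) b \<omega>) \<omega> = Y 0 \<rho> b \<omega>"
proof -
  have r: "stopping_time F \<rho>" by (rule ST_st[OF STr])
  have O_eq: "Ost Yp (\<lambda>_. T) b = (\<lambda>\<omega>. E (\<lambda>_. T) (\<lambda>_. 0) \<omega> + E (\<lambda>_. T) (\<lambda>_. 1) \<omega>)"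
    using D_pos unfolding O_step_def by (simp add: Igr_TT)
  have aeO: "AE \<omega> in M. Ost Yp (\<lambda>_. T) b \<omega> = 1"
    unfolding O_eq using E_zero[OF stopping_time_const[of F T]] E_one[OF stopping_time_const[of F T]]
    by eventually_elim simp
  have Gmm[measurable]: "Gm b \<rho> (\<lambda>_. T) \<in> borel_measurable M" by (rule GmT_meas[OF STr])
  have "AE \<omega> in M. E \<rho> (\<lambda>\<omega>. exp (Gm b \<rho> (\<lambda>_. T) \<omega>) * Ost Yp (\<lambda>_. T) b \<omega>) \<omega> = E \<rho> (\<lambda>\<omega>. exp (Gm b \<rho> (\<lambda>_. T) \<omega>)) \<omega>"
    by (rule E_cong[OF r]) (use aeO in \<open>auto elim: AE_mp simp: O_eq\<close>)
  then show ?thesis by simp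
qed

lemma T_in_stf: "ST \<rho> \<Longrightarrow> (\<lambda>_. T) \<in> stopping_times_from M F T \<rho>"
  by (auto simp: stopping_times_from_def stopping_time_const ST_def elim: AE_mp)

lemma ess_prop:
  assumes "\<exists>Y. Y \<in> borel_measurable M \<and> (\<forall>Z\<in>Zs. AE \<omega> in M. Z \<omega> \<le> Y \<omega>) \<and>
          (\<forall>Y'\<in>borel_measurable M. (\<forall>Z\<in>Zs. AE \<omega> in M. Z \<omega> \<le> Y' \<omega>) \<longrightarrow> (AE \<omega> in M. Y \<omega> \<le> Y' \<omega>))"
  shows "ess_sup_family M Zs \<in> borel_measurable M \<and> (\<forall>Z\<in>Zs. AE \<omega> in M. Z \<omega> \<le> ess_sup_family M Zs \<omega>) \<and>
          (\<forall>Y'\<in>borel_measurable M. (\<forall>Z\<in>Zs. AE \<omega> in M. Z \<omega> \<le> Y' \<omega>) \<longrightarrow> (AE \<omega> in M. ess_sup_family M Zs \<omega> \<le> Y' \<omega>))"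
  unfolding ess_sup_family_def by (rule someI_ex[OF assms])

lemma Y_props:
  "ST \<rho> \<Longrightarrow> Y m \<rho> b \<in> borel_measurable M \<and> (AE \<omega> in M. 0 \<le> Y m \<rho> b \<omega> \<and> Y m \<rho> b \<omega> \<le> Bnd \<rho> \<omega> \<and> Y 0 \<rho> b \<omega> \<le> Y m \<rho> b \<omega>)"
proof (induction m arbitrary: \<rho> b)
  case 0
  have "Y 0 \<rho> b \<in> borel_measurable M" by (simp only: Ysch.simps E_meas)
  then show ?case using Y0_props[OF 0] by (auto simp del: Ysch.simps)
next
  case (Suc m)
  have IH: "\<forall>\<rho> b. ST \<rho> \<longrightarrow> Y m \<rho> b \<in> borel_measurable M \<and> (AE \<omega> in M. 0 \<le> Y m \<rho> b \<omega> \<and> Y m \<rho> b \<omega> \<le> Bnd \<rho> \<omega>)"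
    using Suc.IH by (auto elim: AE_mp)
  define Zs where "Zs = {E \<rho> (\<lambda>\<omega>. exp (Gm b \<rho> \<nu> \<omega>) * Ost (Y m) \<nu> b \<omega>) | \<nu>. \<nu> \<in> stopping_times_from M F T \<rho>}"
  have Yeq: "Y (Suc m) \<rho> b = ess_sup_family M Zs" by (simp add: Zs_def)
  define ZT where "ZT = E \<rho> (\<lambda>\<omega>. exp (Gm b \<rho> (\<lambda>_. T) \<omega>) * Ost (Y m) (\<lambda>_. T) b \<omega>)"
  have ZT: "ZT \<in> Zs" unfolding Zs_def ZT_def using T_in_stf[OF Suc.prems] by blast
  have Zsm: "Zs \<subseteq> borel_measurable M" unfolding Zs_def by auto
  have Zbnd: "\<forall>Z\<in>Zs. AE \<omega> in M. Z \<omega> \<le> Bnd \<rho> \<omega>"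
    unfolding Zs_def using member_props[OF IH Suc.prems] by (auto elim: AE_mp)
  note ex = ess_sup_exists[OF prob Zsm ZT E_meas Zbnd]
  note P = ess_prop[OF ex, folded Yeq]
  have ZT_eq: "AE \<omega> in M. ZT \<omega> = Y 0 \<rho> b \<omega>" unfolding ZT_def by (rule member_T[OF Suc.prems])
  have "AE \<omega> in M. ZT \<omega> \<le> Y (Suc m) \<rho> b \<omega>" using P ZT by blast
  moreover have "AE \<omega> in M. Y (Suc m) \<rho> b \<omega> \<le> Bnd \<rho> \<omega>" using P Zbnd E_meas by blast
  moreover note ZT_eq Y0_props[OF Suc.prems, of b]
  ultimately have "AE \<omega> in M. 0 \<le> Y (Suc m) \<rho> b \<omega> \<and> Y (Suc m) \<rho> b \<omega> \<le> Bnd \<rho> \<omega> \<and> Y 0 \<rho> b \<omega> \<le> Y (Suc m) \<rho> b \<omega>"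
    by eventually_elim auto
  then show ?case using P by blast
qed

end



context sch begin

lemma ST_const: "0 \<le> t \<Longrightarrow> t \<le> T \<Longrightarrow> ST (\<lambda>_. t)"
  by (simp add: ST_def stopping_time_const)

lemma partD:
  assumes t: "0 \<le> t" "T - \<Delta> \<le> t" "t \<le> T"
  shows "AE \<omega> in M. Y (Suc m) (\<lambda>_. t) b \<omega> = Ost (Y m) (\<lambda>_. t) b \<omega>"
proof -
  define \<rho> :: "'a \<Rightarrow> real" where "\<rho> = (\<lambda>_. t)"
  have STr: "ST \<rho>" unfolding \<rho>_def using t by (intro ST_const)
  have r: "stopping_time F \<rho>" by (rule ST_st[OF STr])
  define Y0 where "Y0 = Y 0 \<rho> b"
  have Y0m[measurable]: "Y0 \<in> borel_measurable M" unfolding Y0_def by (simp only: Ysch.simps E_meas)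
  have GmTm[measurable]: "Gm b \<rho> (\<lambda>_. T) \<in> borel_measurable M" by (rule GmT_meas[OF STr])
  have Ost_eq: "Ost (Y m) \<rho> b = (\<lambda>\<omega>. E \<rho> (\<lambda>_. 0) \<omega> + Y0 \<omega>)"
    using t unfolding O_step_def Y0_def \<rho>_def by (auto simp: fun_eq_iff)
  have Ost_ae: "AE \<omega> in M. Ost (Y m) \<rho> b \<omega> = Y0 \<omega>"
    unfolding Ost_eq using E_zero[OF r] by eventually_elim simp
  define Zs where "Zs = {E \<rho> (\<lambda>\<omega>. exp (Gm b \<rho> \<nu> \<omega>) * Ost (Y m) \<nu> b \<omega>) | \<nu>. \<nu> \<in> stopping_times_from M F T \<rho>}"
  have Yeq: "Y (Suc m) \<rho> b = ess_sup_family M Zs" by (simp add: Zs_def)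
  have mem: "AE \<omega> in M. E \<rho> (\<lambda>\<omega>. exp (Gm b \<rho> \<nu> \<omega>) * Ost (Y m) \<nu> b \<omega>) \<omega> = Y0 \<omega>"
    if nu: "\<nu> \<in> stopping_times_from M F T \<rho>" for \<nu>
  proof -
    have STn: "ST \<nu>" and n: "stopping_time F \<nu>" and ae: "AE \<omega> in M. 0 \<le> \<rho> \<omega> \<and> \<rho> \<omega> \<le> \<nu> \<omega> \<and> \<nu> \<omega> \<le> T"
      using stf_ST[OF STr nu] by auto
    have nm[measurable]: "\<nu> \<in> borel_measurable M" by (rule st_meas[OF n])
    define Araw where "Araw = (\<lambda>\<omega>'. indicator {\<omega>''. \<nu> \<omega>'' < T - \<Delta>} \<omega>' *
               Max ((\<lambda>\<beta>. exp (Igr g X b \<nu> (\<lambda>\<omega>''. \<nu> \<omega>'' + \<Delta>) \<omega>' - \<psi> \<beta>)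
                          * Y m (\<lambda>\<omega>''. min (\<nu> \<omega>'' + \<Delta>) T) (b + \<beta>) \<omega>') ` U) :: real)"
    define I2 :: "'a \<Rightarrow> real" where "I2 \<omega> = indicator {\<omega>''. T - \<Delta> \<le> \<nu> \<omega>'' \<and> \<nu> \<omega>'' \<le> T} \<omega>" for \<omega>
    define B where "B = (\<lambda>\<omega>'. exp (Gm b \<nu> (\<lambda>_. T) \<omega>'))"
    have Oeq: "Ost (Y m) \<nu> b = (\<lambda>\<omega>. E \<nu> Araw \<omega> + I2 \<omega> * E \<nu> B \<omega>)"
      unfolding O_step_def Araw_def I2_def B_def ..
    have A0: "AE \<omega> in M. Araw \<omega> = 0"
      using ae unfolding \<rho>_def by eventually_elim (use t in \<open>auto simp: Araw_def\<close>)
    have Am: "Araw \<in> borel_measurable M"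
      by (rule meas_ae_M[of "\<lambda>_. 0"]) (use A0 in \<open>auto elim: AE_mp\<close>)
    have EA0: "AE \<omega> in M. E \<nu> Araw \<omega> = 0"
      using E_cong[OF n A0 Am borel_measurable_const] E_zero[OF n] by eventually_elim simp
    have I21: "AE \<omega> in M. I2 \<omega> = 1"
      using ae unfolding \<rho>_def by eventually_elim (use t in \<open>auto simp: I2_def\<close>)
    have O_ae: "AE \<omega> in M. Ost (Y m) \<nu> b \<omega> = E \<nu> B \<omega>"
      unfolding Oeq using EA0 I21 by eventually_elim simp
    have Gmm: "Gm b \<rho> \<nu> \<in> borel_measurable (pre_sigma \<nu>)" by (rule Gm_meas[OF r n ae])
    have f_pre: "(\<lambda>\<omega>. exp (Gm b \<rho> \<nu> \<omega>)) \<in> borel_measurable (pre_sigma \<nu>)"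
      by (rule measurable_compose[OF Gmm borel_measurable_exp])
    have fm[measurable]: "(\<lambda>\<omega>. exp (Gm b \<rho> \<nu> \<omega>)) \<in> borel_measurable M" by (rule pre_meas_M[OF n f_pre])
    have Bm[measurable]: "B \<in> borel_measurable M" unfolding B_def using GmT_meas[OF STn] by measurable
    have Om[measurable]: "Ost (Y m) \<nu> b \<in> borel_measurable M" unfolding Oeq I2_def by measurable
    have fB: "AE \<omega> in M. exp (Gm b \<rho> \<nu> \<omega>) * B \<omega> = exp (Gm b \<rho> (\<lambda>_. T) \<omega>)"
      using AE_good ae
    proof eventually_elim
      case (elim \<omega>)
      have "Gm b \<rho> \<nu> \<omega> + Gm b \<nu> (\<lambda>_. T) \<omega> = Gm b \<rho> (\<lambda>_. T) \<omega>"
        using good_facts(2)[of \<omega> "\<rho> \<omega>" "\<nu> \<omega>" T b] elim by (simp add: Gm_eq)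
      then show ?case by (simp add: B_def flip: exp_add)
    qed
    have fB_int: "integrable M (\<lambda>\<omega>. exp (Gm b \<rho> \<nu> \<omega>) * B \<omega>)"
      by (rule integrable_cong_AE_imp[OF expGmT_int[OF STr]]) (use fB in \<open>auto elim: AE_mp\<close>)
    have c1: "AE \<omega> in M. E \<rho> (\<lambda>\<omega>. exp (Gm b \<rho> \<nu> \<omega>) * Ost (Y m) \<nu> b \<omega>) \<omega> = E \<rho> (\<lambda>\<omega>. exp (Gm b \<rho> \<nu> \<omega>) * E \<nu> B \<omega>) \<omega>"
      by (rule E_cong[OF r]) (use O_ae in \<open>auto elim: AE_mp\<close>)
    have pull: "AE \<omega> in M. E \<nu> (\<lambda>\<omega>. exp (Gm b \<rho> \<nu> \<omega>) * B \<omega>) \<omega> = exp (Gm b \<rho> \<nu> \<omega>) * E \<nu> B \<omega>"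
      by (rule E_pull[OF n f_pre Bm fB_int])
    have c2: "AE \<omega> in M. E \<rho> (\<lambda>\<omega>. exp (Gm b \<rho> \<nu> \<omega>) * E \<nu> B \<omega>) \<omega> = E \<rho> (E \<nu> (\<lambda>\<omega>. exp (Gm b \<rho> \<nu> \<omega>) * B \<omega>)) \<omega>"
      by (rule E_cong[OF r]) (use pull in \<open>auto elim: AE_mp\<close>)
    have c3: "AE \<omega> in M. E \<rho> (E \<nu> (\<lambda>\<omega>. exp (Gm b \<rho> \<nu> \<omega>) * B \<omega>)) \<omega> = E \<rho> (\<lambda>\<omega>. exp (Gm b \<rho> \<nu> \<omega>) * B \<omega>) \<omega>"
      by (rule E_tower[OF r n _ fB_int]) (use ae in \<open>auto elim: AE_mp\<close>)
    have c4: "AE \<omega> in M. E \<rho> (\<lambda>\<omega>. exp (Gm b \<rho> \<nu> \<omega>) * B \<omega>) \<omega> = Y0 \<omega>"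
      unfolding Y0_def Y0_eq by (rule E_cong[OF r fB]) measurable
    show ?thesis using c1 c2 c3 c4 by eventually_elim simp
  qed
  have Zs_le: "\<forall>Z\<in>Zs. AE \<omega> in M. Z \<omega> \<le> Y0 \<omega>"
  proof
    fix Z assume "Z \<in> Zs"
    then obtain \<nu> where Z: "Z = E \<rho> (\<lambda>\<omega>. exp (Gm b \<rho> \<nu> \<omega>) * Ost (Y m) \<nu> b \<omega>)"
      and nu: "\<nu> \<in> stopping_times_from M F T \<rho>" unfolding Zs_def by blast
    show "AE \<omega> in M. Z \<omega> \<le> Y0 \<omega>" using mem[OF nu] unfolding Z by eventually_elim simp
  qed
  define ZT where "ZT = E \<rho> (\<lambda>\<omega>. exp (Gm b \<rho> (\<lambda>_. T) \<omega>) * Ost (Y m) (\<lambda>_. T) b \<omega>)"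
  have ZT: "ZT \<in> Zs" unfolding Zs_def ZT_def using T_in_stf[OF STr] by blast
  have ZT_eq: "AE \<omega> in M. ZT \<omega> = Y0 \<omega>" unfolding ZT_def Y0_def by (rule member_T[OF STr])
  have ex: "\<exists>Y. Y \<in> borel_measurable M \<and> (\<forall>Z\<in>Zs. AE \<omega> in M. Z \<omega> \<le> Y \<omega>) \<and>
          (\<forall>Y'\<in>borel_measurable M. (\<forall>Z\<in>Zs. AE \<omega> in M. Z \<omega> \<le> Y' \<omega>) \<longrightarrow> (AE \<omega> in M. Y \<omega> \<le> Y' \<omega>))"
  proof (intro exI[of _ Y0] conjI ballI impI Y0m)
    fix Z assume "Z \<in> Zs" then show "AE \<omega> in M. Z \<omega> \<le> Y0 \<omega>" using Zs_le by blast
  next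
    fix Y' :: "'a \<Rightarrow> real" assume "\<forall>Z\<in>Zs. AE \<omega> in M. Z \<omega> \<le> Y' \<omega>"
    then have "AE \<omega> in M. ZT \<omega> \<le> Y' \<omega>" using ZT by blast
    then show "AE \<omega> in M. Y0 \<omega> \<le> Y' \<omega>" using ZT_eq by eventually_elim simp
  qed
  note P = ess_prop[OF ex, folded Yeq]
  have "AE \<omega> in M. Y (Suc m) \<rho> b \<omega> \<le> Y0 \<omega>" using P Zs_le Y0m by blast
  moreover have "AE \<omega> in M. ZT \<omega> \<le> Y (Suc m) \<rho> b \<omega>" using P ZT by blast
  ultimately have "AE \<omega> in M. Y (Suc m) \<rho> b \<omega> = Y0 \<omega>" using ZT_eq by eventually_elim simp
  then show ?thesis using Ost_ae unfolding \<rho>_def by eventually_elim simp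
qed

lemma tau_bound:
  assumes tau: "stopping_time F \<tau>" "\<And>\<omega>. \<omega> \<in> space M \<Longrightarrow> 0 \<le> \<tau> \<omega> \<and> \<tau> \<omega> \<le> T"
    and t: "0 \<le> t" "t \<le> T"
  shows "AE \<omega> in M. \<tau> \<omega> \<le> t \<longrightarrow> Bnd (\<lambda>_. t) \<omega> \<le> real_cond_exp M (F t) (\<lambda>\<omega>'. exp (LINT s:{\<tau> \<omega>'..T}|lborel. \<gamma> s \<omega>')) \<omega>"
proof -
  define \<rho> :: "'a \<Rightarrow> real" where "\<rho> = (\<lambda>_. t)"
  have STr: "ST \<rho>" unfolding \<rho>_def using t by (intro ST_const)
  have r: "stopping_time F \<rho>" by (rule ST_st[OF STr])
  have STt: "ST \<tau>" using tau by (auto simp: ST_def intro!: AE_I2)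
  define I :: "'a \<Rightarrow> real" where "I \<omega> = (if \<tau> \<omega> \<le> t then 1 else 0)" for \<omega>
  have IF: "I \<in> borel_measurable (F t)"
  proof -
    have "Measurable.pred (F t) (\<lambda>\<omega>. \<tau> \<omega> \<le> t)" by (rule stopping_timeD[OF tau(1)])
    then show ?thesis unfolding I_def by measurable
  qed
  have Ipre: "I \<in> borel_measurable (pre_sigma \<rho>)"
    using IF unfolding \<rho>_def by (subst measurable_cong_sets[OF pre_const refl])
  have Im[measurable]: "I \<in> borel_measurable M" by (rule pre_meas_M[OF r Ipre])
  define f1 where "f1 \<omega> = exp (\<Gamma> \<rho> (\<lambda>_. T) \<omega>)" for \<omega>
  define f2 where "f2 \<omega> = exp (\<Gamma> \<tau> (\<lambda>_. T) \<omega>)" for \<omega>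
  have f1m[measurable]: "f1 \<in> borel_measurable M" unfolding f1_def using \<Gamma>T_meas[OF STr] by measurable
  have f2m[measurable]: "f2 \<in> borel_measurable M" unfolding f2_def using \<Gamma>T_meas[OF STt] by measurable
  have Iint: "integrable M (\<lambda>\<omega>. I \<omega> * f \<omega>)" if "integrable M f" "f \<in> borel_measurable M" for f
  proof (rule Bochner_Integration.integrable_bound[OF that(1)])
    show "AE x in M. norm (I x * f x) \<le> norm (f x)" by (intro AE_I2) (auto simp: I_def)
  qed (intro borel_measurable_times Im that(2))
  have i1: "integrable M (\<lambda>\<omega>. I \<omega> * f1 \<omega>)"
    using Iint exp\<Gamma>T_int[OF STr] f1m unfolding f1_def by blast
  have i2: "integrable M (\<lambda>\<omega>. I \<omega> * f2 \<omega>)"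
    using Iint exp\<Gamma>T_int[OF STt] f2m unfolding f2_def by blast
  have le: "AE \<omega> in M. I \<omega> * f1 \<omega> \<le> I \<omega> * f2 \<omega>"
    using AE_good
  proof eventually_elim
    case (elim \<omega>)
    show ?case
    proof (cases "\<tau> \<omega> \<le> t")
      case True
      have w: "\<omega> \<in> space M" using elim by (simp add: good_def)
      have "\<Gamma> \<tau> \<rho> \<omega> + \<Gamma> \<rho> (\<lambda>_. T) \<omega> = \<Gamma> \<tau> (\<lambda>_. T) \<omega>"
        using good_facts(1)[of \<omega> "\<tau> \<omega>" t T] elim tau(2)[OF w] True t by (simp add: \<rho>_def)
      moreover have "0 \<le> \<Gamma> \<tau> \<rho> \<omega>"
        using good_facts(4)[of \<omega> "\<tau> \<omega>" t T] elim tau(2)[OF w] True t by (simp add: \<rho>_def)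
      ultimately show ?thesis using True by (simp add: I_def f1_def f2_def)
    qed (simp add: I_def)
  qed
  have p1: "AE \<omega> in M. E \<rho> (\<lambda>\<omega>. I \<omega> * f1 \<omega>) \<omega> = I \<omega> * E \<rho> f1 \<omega>" by (rule E_pull[OF r Ipre f1m i1])
  have p2: "AE \<omega> in M. E \<rho> (\<lambda>\<omega>. I \<omega> * f2 \<omega>) \<omega> = I \<omega> * E \<rho> f2 \<omega>" by (rule E_pull[OF r Ipre f2m i2])
  have m: "AE \<omega> in M. E \<rho> (\<lambda>\<omega>. I \<omega> * f1 \<omega>) \<omega> \<le> E \<rho> (\<lambda>\<omega>. I \<omega> * f2 \<omega>) \<omega>" by (rule E_mono[OF r le i1 i2])
  have EF: "E \<rho> f2 = real_cond_exp M (F t) f2" unfolding \<rho>_def by (rule fun_cong[OF E_const])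
  show ?thesis using p1 p2 m
  proof eventually_elim
    case (elim \<omega>)
    show ?case
    proof
      assume "\<tau> \<omega> \<le> t"
      then have "E \<rho> f1 \<omega> \<le> E \<rho> f2 \<omega>" using elim by (simp add: I_def)
      then show "Bnd (\<lambda>_. t) \<omega> \<le> real_cond_exp M (F t) (\<lambda>\<omega>'. exp (LINT s:{\<tau> \<omega>'..T}|lborel. \<gamma> s \<omega>')) \<omega>"
        using EF unfolding f1_def[abs_def] f2_def[abs_def] \<rho>_def by simp
    qed
  qed
qed

end



lemma finite_Vset: assumes "finite U" shows "finite (Vset U T \<Delta>)"
proof -
  have "Usums U k = sum_list ` {as. set as \<subseteq> U \<and> length as = k}" for k
    by (auto simp: Usums_def)
  then have "finite (Usums U k)" for k using finite_lists_length_eq[OF assms] by simp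
  then show ?thesis unfolding Vset_def by auto
qed

lemma at_rv_eq:
  assumes "finite V" "\<xi> \<omega> \<in> V"
  shows "at_rv V Z \<xi> \<omega> = Z (\<xi> \<omega>) \<omega>"
proof -
  have "at_rv V Z \<xi> \<omega> = (\<Sum>a\<in>V. if \<xi> \<omega> = a then Z a \<omega> else 0)"
    unfolding at_rv_def by (intro sum.cong) (auto simp: indicator_def)
  also have "\<dots> = Z (\<xi> \<omega>) \<omega>" using assms by (simp add: sum.delta)
  finally show ?thesis .
qed

lemma bf_props:
  assumes BM: "std_brownian_motion M T B"
  shows "space (brownian_filtration M B T t) = space M"
    and "sets (brownian_filtration M B T t) \<subseteq> sets M"
    and "s \<le> t \<Longrightarrow> sets (brownian_filtration M B T s) \<subseteq> sets (brownian_filtration M B T t)"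
    and "null_sets M \<subseteq> sets (brownian_filtration M B T t)"
proof -
  define G where "G t = {B r -` A \<inter> space M | r A. r \<in> {0..min t T} \<and> A \<in> sets borel} \<union> null_sets M" for t
  have Bm: "B r \<in> borel_measurable M" if "r \<in> {0..T}" for r
    using BM that unfolding std_brownian_motion_def by auto
  have GM: "G t \<subseteq> sets M" for t
    unfolding G_def using Bm by (auto intro!: measurable_sets)
  have GP: "G t \<subseteq> Pow (space M)" for t using GM[of t] sets.sets_into_space by blast
  have bf: "brownian_filtration M B T t = sigma (space M) (G t)" for t
    unfolding brownian_filtration_def G_def ..
  have sets_bf: "sets (brownian_filtration M B T t) = sigma_sets (space M) (G t)" for t
    unfolding bf using GP by (simp add: sets_measure_of)
  show "space (brownian_filtration M B T t) = space M"
    unfolding bf using GP by (simp add: space_measure_of_conv)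
  show "sets (brownian_filtration M B T t) \<subseteq> sets M"
    unfolding sets_bf using GM by (rule sets.sigma_sets_subset)
  show "s \<le> t \<Longrightarrow> sets (brownian_filtration M B T s) \<subseteq> sets (brownian_filtration M B T t)"
  proof -
    assume "s \<le> t"
    have "{B r -` A \<inter> space M | r A. r \<in> {0..min s T} \<and> A \<in> sets borel} \<subseteq>
          {B r -` A \<inter> space M | r A. r \<in> {0..min t T} \<and> A \<in> sets borel}"
    proof
      fix x assume "x \<in> {B r -` A \<inter> space M | r A. r \<in> {0..min s T} \<and> A \<in> sets borel}"
      then obtain r A where x: "x = B r -` A \<inter> space M" and r: "r \<in> {0..min s T}" and A: "A \<in> sets borel"
        by blast
      have "r \<in> {0..min t T}" using r \<open>s \<le> t\<close> by auto
      then show "x \<in> {B r -` A \<inter> space M | r A. r \<in> {0..min t T} \<and> A \<in> sets borel}"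
        using x A by blast
    qed
    then have "G s \<subseteq> G t" unfolding G_def by (rule Un_mono[OF _ order_refl])
    then show ?thesis unfolding sets_bf by (rule sigma_sets_mono')
  qed
  show "null_sets M \<subseteq> sets (brownian_filtration M B T t)"
    unfolding sets_bf G_def by (auto intro: sigma_sets.Basic)
qed

theorem corollary2p1:
  fixes M :: "'a measure"
    and T \<Delta> :: real
    and B :: "real \<Rightarrow> 'a \<Rightarrow> real^'d"
    and F :: "real \<Rightarrow> 'a measure"
    and X :: "real \<Rightarrow> 'a \<Rightarrow> real^'l"
    and U :: "(real^'l) set"
    and \<psi> :: "real^'l \<Rightarrow> real"
    and g :: "real \<Rightarrow> 'a \<Rightarrow> real^'l \<Rightarrow> real"
    and \<gamma> :: "real \<Rightarrow> 'a \<Rightarrow> real"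
    and \<tau> :: "'a \<Rightarrow> real"
    and \<xi> :: "'a \<Rightarrow> real^'l"
  assumes "prob_space M" and "complete_measure M"
    and "0 < T"
    and "std_brownian_motion M T B"
    and F_def: "F = brownian_filtration M B T"
    and "progressive F T X"
    and "(\<integral>\<^sup>+\<omega>. (\<integral>\<^sup>+s\<in>{0..T}. ennreal ((norm (X s \<omega>))\<^sup>2) \<partial>lborel) \<partial>M) < \<infinity>"
    and "0 < \<Delta>" and "\<Delta> < T"
    and "finite U" and "U \<noteq> {}"
    and "\<And>x. 0 \<le> \<psi> x"
    and "progressive_param F T g"
    and "progressive F T \<gamma>"
    and "\<And>t \<omega>. t \<in> {0..T} \<Longrightarrow> \<omega> \<in> space M \<Longrightarrow> 0 \<le> \<gamma> t \<omega>"
    and "AE \<omega> in M. set_integrable lborel {0..T} (\<lambda>s. \<gamma> s \<omega>)"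
    and "integrable M (\<lambda>\<omega>. exp (LINT s:{0..T}|lborel. \<gamma> s \<omega>))"
    and "AE \<omega> in M. \<forall>t\<in>{0..T}. \<forall>x. \<bar>g t \<omega> x\<bar> \<le> \<gamma> t \<omega>"
    and "stopping_time F \<tau>" and "\<And>\<omega>. \<omega> \<in> space M \<Longrightarrow> 0 \<le> \<tau> \<omega> \<and> \<tau> \<omega> \<le> T"
    and "\<xi> \<in> borel_measurable (filtration.pre_sigma (space M) F \<tau>)"
    and "\<And>\<omega>. \<omega> \<in> space M \<Longrightarrow> \<xi> \<omega> \<in> Vset U T \<Delta>"
  shows
    "(\<forall>n. \<forall>t\<in>{0..T}. AE \<omega> in M. \<tau> \<omega> \<le> t \<longrightarrow>
        0 \<le> at_rv (Vset U T \<Delta>) (Ysch M F T X \<Delta> U \<psi> g 0 (\<lambda>_. t)) \<xi> \<omega> \<and>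
        at_rv (Vset U T \<Delta>) (Ysch M F T X \<Delta> U \<psi> g 0 (\<lambda>_. t)) \<xi> \<omega>
          \<le> at_rv (Vset U T \<Delta>) (Ysch M F T X \<Delta> U \<psi> g n (\<lambda>_. t)) \<xi> \<omega> \<and>
        at_rv (Vset U T \<Delta>) (Ysch M F T X \<Delta> U \<psi> g n (\<lambda>_. t)) \<xi> \<omega>
          \<le> real_cond_exp M (F t) (\<lambda>\<omega>'. exp (LINT s:{\<tau> \<omega>'..T}|lborel. \<gamma> s \<omega>')) \<omega>)
     \<and>
     ((AE \<omega> in M. T - \<Delta> \<le> \<tau> \<omega>) \<longrightarrow>
       (\<forall>n\<ge>1. \<forall>t\<in>{0..T}. AE \<omega> in M. \<tau> \<omega> \<le> t \<longrightarrow>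
          at_rv (Vset U T \<Delta>) (Ysch M F T X \<Delta> U \<psi> g n (\<lambda>_. t)) \<xi> \<omega>
          = at_rv (Vset U T \<Delta>) (Osch M F T X \<Delta> U \<psi> g n (\<lambda>_. t)) \<xi> \<omega>))"
proof -
  note A = assms
  interpret sch M F T X \<Delta> U \<psi> g \<gamma>
  proof (rule sch.intro)
    show "stp M F T"
    proof (rule stp.intro)
      show "\<And>t. space (F t) = space M" unfolding F_def by (rule bf_props(1)[OF A(4)])
      show "\<And>t. sets (F t) \<subseteq> sets M" unfolding F_def by (rule bf_props(2)[OF A(4)])
      show "\<And>s t. s \<le> t \<Longrightarrow> sets (F s) \<subseteq> sets (F t)" unfolding F_def by (rule bf_props(3)[OF A(4)])
      show "\<And>t. null_sets M \<subseteq> sets (F t)" unfolding F_def by (rule bf_props(4)[OF A(4)])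
    qed (rule A(1), rule A(2), rule A(3))
    show "sch_axioms M F T X \<Delta> U \<psi> g \<gamma>"
      unfolding sch_axioms_def using A(6,8,10,11,12,13,14,15,16,17,18) by blast
  qed
  define V where "V = Vset U T \<Delta>"
  have fV: "finite V" unfolding V_def by (rule finite_Vset[OF A(10)])
  have \<xi>V: "\<And>\<omega>. \<omega> \<in> space M \<Longrightarrow> \<xi> \<omega> \<in> V" unfolding V_def by (rule A(22))
  have part1: "AE \<omega> in M. \<tau> \<omega> \<le> t \<longrightarrow>
        0 \<le> at_rv V (Ysch M F T X \<Delta> U \<psi> g 0 (\<lambda>_. t)) \<xi> \<omega> \<and>
        at_rv V (Ysch M F T X \<Delta> U \<psi> g 0 (\<lambda>_. t)) \<xi> \<omega>
          \<le> at_rv V (Ysch M F T X \<Delta> U \<psi> g n (\<lambda>_. t)) \<xi> \<omega> \<and>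
        at_rv V (Ysch M F T X \<Delta> U \<psi> g n (\<lambda>_. t)) \<xi> \<omega>
          \<le> real_cond_exp M (F t) (\<lambda>\<omega>'. exp (LINT s:{\<tau> \<omega>'..T}|lborel. \<gamma> s \<omega>')) \<omega>"
    if t: "t \<in> {0..T}" for n t
  proof -
    have STt: "ST (\<lambda>_. t)" using t by (intro ST_const) auto
    have "AE \<omega> in M. \<forall>a\<in>V. 0 \<le> Ysch M F T X \<Delta> U \<psi> g 0 (\<lambda>_. t) a \<omega> \<and>
        Ysch M F T X \<Delta> U \<psi> g 0 (\<lambda>_. t) a \<omega> \<le> Ysch M F T X \<Delta> U \<psi> g n (\<lambda>_. t) a \<omega> \<and>
        Ysch M F T X \<Delta> U \<psi> g n (\<lambda>_. t) a \<omega> \<le> Bnd (\<lambda>_. t) \<omega>"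
    proof (rule AE_finite_allI[OF fV])
      fix a
      show "AE \<omega> in M. 0 \<le> Ysch M F T X \<Delta> U \<psi> g 0 (\<lambda>_. t) a \<omega> \<and>
        Ysch M F T X \<Delta> U \<psi> g 0 (\<lambda>_. t) a \<omega> \<le> Ysch M F T X \<Delta> U \<psi> g n (\<lambda>_. t) a \<omega> \<and>
        Ysch M F T X \<Delta> U \<psi> g n (\<lambda>_. t) a \<omega> \<le> Bnd (\<lambda>_. t) \<omega>"
        using conjunct2[OF Y_props[OF STt, of n a]] Y0_props[OF STt, of a] by eventually_elim auto
    qed
    moreover have "AE \<omega> in M. \<tau> \<omega> \<le> t \<longrightarrow> Bnd (\<lambda>_. t) \<omega> \<le> real_cond_exp M (F t) (\<lambda>\<omega>'. exp (LINT s:{\<tau> \<omega>'..T}|lborel. \<gamma> s \<omega>')) \<omega>"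
      using t by (intro tau_bound A(19) A(20)) auto
    ultimately show ?thesis using AE_space
    proof eventually_elim
      case (elim \<omega>)
      then have "\<xi> \<omega> \<in> V" using \<xi>V by blast
      then show ?case using bspec[OF elim(1) \<open>\<xi> \<omega> \<in> V\<close>] elim(2)
        unfolding at_rv_eq[where \<xi>=\<xi> and \<omega>=\<omega>, OF fV \<open>\<xi> \<omega> \<in> V\<close>] by (auto simp del: Ysch.simps)
    qed
  qed
  have part2: "AE \<omega> in M. \<tau> \<omega> \<le> t \<longrightarrow>
          at_rv V (Ysch M F T X \<Delta> U \<psi> g n (\<lambda>_. t)) \<xi> \<omega>
          = at_rv V (Osch M F T X \<Delta> U \<psi> g n (\<lambda>_. t)) \<xi> \<omega>"
    if ae: "AE \<omega> in M. T - \<Delta> \<le> \<tau> \<omega>" and n: "1 \<le> n" and t: "t \<in> {0..T}" for n t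
  proof (cases "t < T - \<Delta>")
    case True
    show ?thesis using ae by eventually_elim (use True in auto)
  next
    case False
    obtain m where m: "n = Suc m" using n by (cases n) auto
    have "AE \<omega> in M. \<forall>a\<in>V. Ysch M F T X \<Delta> U \<psi> g n (\<lambda>_. t) a \<omega> = Osch M F T X \<Delta> U \<psi> g n (\<lambda>_. t) a \<omega>"
    proof (rule AE_finite_allI[OF fV])
      fix a
      show "AE \<omega> in M. Ysch M F T X \<Delta> U \<psi> g n (\<lambda>_. t) a \<omega> = Osch M F T X \<Delta> U \<psi> g n (\<lambda>_. t) a \<omega>"
        unfolding m Osch_def using partD[of t m a] False t by simp
    qed
    then show ?thesis using AE_space
    proof eventually_elim
      case (elim \<omega>)
      then have "\<xi> \<omega> \<in> V" using \<xi>V by blast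
      then show ?case using elim by (simp add: at_rv_eq[OF fV])
    qed
  qed
  show ?thesis using part1 part2 unfolding V_def by blast
qed


end
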